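(* Let $x$ be a local minimizer of $J(x)=\int_a^b L(t,x(t),{}^CD_{a+}^{\alpha,\rho}x(t))\,dt$ on the set of functions in $C^1[a,b]$ satisfying those of the boundary conditions $x(a)=x_a$, $x(b)=x_b$ that are imposed (each endpoint value may be fixed or free). Then $$\partial_2L(t,x(t),{}^CD_{a+}^{\alpha,\rho} x(t))-D_{b-}^{\alpha,\rho}\big(\partial_3L(t,x(t),{}^CD_{a+}^{\alpha,\rho} x(t))\big)=0,\quad t\in[a,b].$$ If $x(a)$ is free, then $I_{b-}^{1-\alpha,\rho}\big(\partial_3L(t,x(t),{}^CD_{a+}^{\alpha,\rho}x(t))\big)=0$ at $t=a$. If $x(b)$ is free, then $I_{b-}^{1-\alpha,\rho}\big(\partial_3L(t,x(t),{}^CD_{a+}^{\alpha,\rho}x(t))\big)=0$ at $t=b$.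
   Context: Fix $0<a<b<\infty$, $\alpha\in(0,1)$, $\rho>0$. For $x\in C^1[a,b]$, ${}^CD_{a+}^{\alpha,\rho} x(t)=\frac{\rho^\alpha}{\Gamma(1-\alpha)}\, t^{1-\rho}\frac{d}{dt}\int_a^t \frac{\tau^{\rho-1}}{(t^\rho-\tau^\rho)^\alpha}[x(\tau)-x(a)]\,d\tau=\frac{\rho^\alpha}{\Gamma(1-\alpha)}\int_a^t (t^\rho-\tau^\rho)^{-\alpha}x'(\tau)\,d\tau$. For a function $f$ on $[a,b]$, $I_{b-}^{1-\alpha,\rho} f(t)=\frac{\rho^{\alpha}}{\Gamma(1-\alpha)}\int_t^b (\tau^\rho-t^\rho)^{-\alpha}f(\tau)\,d\tau$ and $D_{b-}^{\alpha,\rho} f(t)=\frac{\rho^\alpha}{\Gamma(1-\alpha)}\frac{d}{dt}\int_t^b (\tau^\rho-t^\rho)^{-\alpha}f(\tau)\,d\tau$. $\partial_i$ denotes the partial derivative with respect to the $i$-th argument. $L:[a,b]\times\mathbb{R}^2\to\mathbb{R}$ is continuously differentiable with respect to its second and third arguments, and for every $x\in C^1[a,b]$ the map $t\mapsto D_{b-}^{\alpha,\rho}(\partial_3L(t,x(t),{}^CD_{a+}^{\alpha,\rho}x(t)))$ is continuous. $C^1[a,b]$ carries the norm $\|x\|=\max|x|+\max|{}^CD_{a+}^{\alpha,\rho}x|$, and local minimizers are taken with respect to this norm. *)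

theory Defs
  imports "HOL-Analysis.Analysis"
begin

definition C1_on :: "real \<Rightarrow> real \<Rightarrow> (real \<Rightarrow> real) \<Rightarrow> bool" where
  "C1_on a b x \<longleftrightarrow>
     (\<exists>x'. (\<forall>t\<in>{a..b}. (x has_real_derivative x' t) (at t within {a..b}))
           \<and> continuous_on {a..b} x')"

text \<open>Left Caputo-Katugampola derivative (second form of the definition, valid on C^1).\<close>
definition caputo_left :: "real \<Rightarrow> real \<Rightarrow> real \<Rightarrow> (real \<Rightarrow> real) \<Rightarrow> real \<Rightarrow> real" where
  "caputo_left a \<alpha> \<rho> x t =
     \<rho> powr \<alpha> / Gamma (1 - \<alpha>) *
       integral {a..t} (\<lambda>\<tau>. (t powr \<rho> - \<tau> powr \<rho>) powr (- \<alpha>) * deriv x \<tau>)"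

text \<open>Right Katugampola fractional integral of order 1-alpha.\<close>
definition int_right :: "real \<Rightarrow> real \<Rightarrow> real \<Rightarrow> (real \<Rightarrow> real) \<Rightarrow> real \<Rightarrow> real" where
  "int_right b \<alpha> \<rho> f t =
     \<rho> powr \<alpha> / Gamma (1 - \<alpha>) *
       integral {t..b} (\<lambda>\<tau>. (\<tau> powr \<rho> - t powr \<rho>) powr (- \<alpha>) * f \<tau>)"

definition deriv_right :: "real \<Rightarrow> real \<Rightarrow> real \<Rightarrow> real \<Rightarrow> (real \<Rightarrow> real) \<Rightarrow> real \<Rightarrow> real" where
  "deriv_right a b \<alpha> \<rho> f t = vector_derivative (int_right b \<alpha> \<rho> f) (at t within {a..b})"

definition partial2 :: "(real \<Rightarrow> real \<Rightarrow> real \<Rightarrow> real) \<Rightarrow> real \<Rightarrow> real \<Rightarrow> real \<Rightarrow> real" where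
  "partial2 L t u v = deriv (\<lambda>w. L t w v) u"

definition partial3 :: "(real \<Rightarrow> real \<Rightarrow> real \<Rightarrow> real) \<Rightarrow> real \<Rightarrow> real \<Rightarrow> real \<Rightarrow> real" where
  "partial3 L t u v = deriv (\<lambda>w. L t u w) v"

definition J_fun :: "real \<Rightarrow> real \<Rightarrow> real \<Rightarrow> real \<Rightarrow> (real \<Rightarrow> real \<Rightarrow> real \<Rightarrow> real) \<Rightarrow> (real \<Rightarrow> real) \<Rightarrow> real" where
  "J_fun a b \<alpha> \<rho> L x = integral {a..b} (\<lambda>t. L t (x t) (caputo_left a \<alpha> \<rho> x t))"

definition admissible :: "real \<Rightarrow> real \<Rightarrow> bool \<Rightarrow> real \<Rightarrow> bool \<Rightarrow> real \<Rightarrow> (real \<Rightarrow> real) \<Rightarrow> bool" where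
  "admissible a b fixa xa fixb xb y \<longleftrightarrow>
     C1_on a b y \<and> (fixa \<longrightarrow> y a = xa) \<and> (fixb \<longrightarrow> y b = xb)"

definition frac_norm :: "real \<Rightarrow> real \<Rightarrow> real \<Rightarrow> real \<Rightarrow> (real \<Rightarrow> real) \<Rightarrow> real" where
  "frac_norm a b \<alpha> \<rho> y =
     (SUP t\<in>{a..b}. \<bar>y t\<bar>) + (SUP t\<in>{a..b}. \<bar>caputo_left a \<alpha> \<rho> y t\<bar>)"

definition local_minimizer ::
  "real \<Rightarrow> real \<Rightarrow> real \<Rightarrow> real \<Rightarrow> (real \<Rightarrow> real \<Rightarrow> real \<Rightarrow> real)
   \<Rightarrow> bool \<Rightarrow> real \<Rightarrow> bool \<Rightarrow> real \<Rightarrow> (real \<Rightarrow> real) \<Rightarrow> bool" where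
  "local_minimizer a b \<alpha> \<rho> L fixa xa fixb xb x \<longleftrightarrow>
     admissible a b fixa xa fixb xb x \<and>
     (\<exists>\<delta>>0. \<forall>y. admissible a b fixa xa fixb xb y \<longrightarrow>
        frac_norm a b \<alpha> \<rho> (\<lambda>t. y t - x t) < \<delta> \<longrightarrow>
        J_fun a b \<alpha> \<rho> L x \<le> J_fun a b \<alpha> \<rho> L y)"

end

theory Submission
  imports Defs
begin

definition kk :: "real \<Rightarrow> real \<Rightarrow> real \<Rightarrow> real \<Rightarrow> real" where
  "kk \<alpha> \<rho> t \<tau> = (t powr \<rho> - \<tau> powr \<rho>) powr (- \<alpha>)"

lemma kk_nonneg: "kk \<alpha> \<rho> t \<tau> \<ge> 0" by (simp add: kk_def)

lemma powr_strict_mono_base: "0 < x \<Longrightarrow> x < y \<Longrightarrow> 0 < \<rho> \<Longrightarrow> x powr \<rho> < y powr (\<rho>::real)"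
  by (simp add: powr_less_mono2)

lemma W_lower:
  assumes a: "0 < a" "a \<le> s" "s \<le> t" and al: "0 < \<alpha>" "\<alpha> < 1" and r: "0 < \<rho>"
  shows "((\<lambda>\<tau>. \<tau> powr (\<rho>-1) * kk \<alpha> \<rho> t \<tau>) has_integral
     ((t powr \<rho> - a powr \<rho>) powr (1-\<alpha>) - (t powr \<rho> - s powr \<rho>) powr (1-\<alpha>)) / (\<rho>*(1-\<alpha>))) {a..s}"
proof -
  define A where "A \<tau> = - ((t powr \<rho> - \<tau> powr \<rho>) powr (1-\<alpha>)) / (\<rho>*(1-\<alpha>))" for \<tau>
  have "((\<lambda>\<tau>. \<tau> powr (\<rho>-1) * kk \<alpha> \<rho> t \<tau>) has_integral (A s - A a)) {a..s}"
  proof (rule fundamental_theorem_of_calculus_interior)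
    show "a \<le> s" by fact
    show "continuous_on {a..s} A" unfolding A_def
    proof -
      have cc: "continuous_on {a..s} (\<lambda>\<tau>. (t powr \<rho> - \<tau> powr \<rho>) powr (1-\<alpha>))"
        by (rule continuous_on_powr') (use a al r in \<open>auto intro!: continuous_intros powr_mono2\<close>)
      then show "continuous_on {a..s} (\<lambda>\<tau>. - ((t powr \<rho> - \<tau> powr \<rho>) powr (1-\<alpha>)) / (\<rho>*(1-\<alpha>)))"
        by (intro continuous_on_divide continuous_on_minus cc continuous_on_const) (use al r in auto)
    qed
    show "(A has_vector_derivative \<tau> powr (\<rho> - 1) * kk \<alpha> \<rho> t \<tau>) (at \<tau>)" if "\<tau> \<in> {a<..<s}" for \<tau>
    proof -
      have t0: "0 < \<tau>" "\<tau> < t" using that a by auto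
      have pos: "0 < t powr \<rho> - \<tau> powr \<rho>" using powr_strict_mono_base[OF t0(1) t0(2) r] by simp
      have d1: "((\<lambda>\<tau>. t powr \<rho> - \<tau> powr \<rho>) has_real_derivative (- (\<rho> * \<tau> powr (\<rho> - 1)))) (at \<tau>)"
        using t0 by (auto intro!: derivative_eq_intros)
      have d2: "((\<lambda>\<tau>. (t powr \<rho> - \<tau> powr \<rho>) powr (1-\<alpha>)) has_real_derivative
               (1-\<alpha>) * (t powr \<rho> - \<tau> powr \<rho>) powr (1-\<alpha>-1) * (- (\<rho> * \<tau> powr (\<rho> - 1)))) (at \<tau>)"
        using DERIV_fun_powr[OF d1 pos, of "1-\<alpha>"] by simp
      have d3: "(A has_real_derivative - ((1-\<alpha>) * (t powr \<rho> - \<tau> powr \<rho>) powr (1-\<alpha>-1) * (- (\<rho> * \<tau> powr (\<rho> - 1)))) / (\<rho>*(1-\<alpha>))) (at \<tau>)"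
        unfolding A_def using DERIV_cdivide[OF DERIV_minus[OF d2], of "\<rho>*(1-\<alpha>)"] by simp
      have "- ((1-\<alpha>) * (t powr \<rho> - \<tau> powr \<rho>) powr (1-\<alpha>-1) * (- (\<rho> * \<tau> powr (\<rho> - 1)))) / (\<rho>*(1-\<alpha>))
            = \<tau> powr (\<rho> - 1) * kk \<alpha> \<rho> t \<tau>"
        using al r by (simp add: kk_def field_simps)
      with d3 show ?thesis by (simp add: has_real_derivative_iff_has_vector_derivative[symmetric])
    qed
  qed
  moreover have "A s - A a = ((t powr \<rho> - a powr \<rho>) powr (1-\<alpha>) - (t powr \<rho> - s powr \<rho>) powr (1-\<alpha>)) / (\<rho>*(1-\<alpha>))"
    unfolding A_def by (simp add: diff_divide_distrib)
  ultimately show ?thesis by simp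
qed

lemma W_upper:
  assumes a: "0 < \<tau>" "\<tau> \<le> b" and al: "0 < \<alpha>" "\<alpha> < 1" and r: "0 < \<rho>"
  shows "((\<lambda>t. t powr (\<rho>-1) * kk \<alpha> \<rho> t \<tau>) has_integral
     (b powr \<rho> - \<tau> powr \<rho>) powr (1-\<alpha>) / (\<rho>*(1-\<alpha>))) {\<tau>..b}"
proof -
  define A where "A t = (t powr \<rho> - \<tau> powr \<rho>) powr (1-\<alpha>) / (\<rho>*(1-\<alpha>))" for t
  have "((\<lambda>t. t powr (\<rho>-1) * kk \<alpha> \<rho> t \<tau>) has_integral (A b - A \<tau>)) {\<tau>..b}"
  proof (rule fundamental_theorem_of_calculus_interior)
    show "\<tau> \<le> b" by fact
    show "continuous_on {\<tau>..b} A" unfolding A_def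
    proof -
      have cc: "continuous_on {\<tau>..b} (\<lambda>t. (t powr \<rho> - \<tau> powr \<rho>) powr (1-\<alpha>))"
        by (rule continuous_on_powr') (use a al r in \<open>auto intro!: continuous_intros powr_mono2\<close>)
      then show "continuous_on {\<tau>..b} (\<lambda>t. (t powr \<rho> - \<tau> powr \<rho>) powr (1-\<alpha>) / (\<rho>*(1-\<alpha>)))"
        by (intro continuous_on_divide cc continuous_on_const) (use al r in auto)
    qed
    show "(A has_vector_derivative t powr (\<rho> - 1) * kk \<alpha> \<rho> t \<tau>) (at t)" if "t \<in> {\<tau><..<b}" for t
    proof -
      have t0: "0 < \<tau>" "\<tau> < t" using that a by auto
      have pos: "0 < t powr \<rho> - \<tau> powr \<rho>" using powr_strict_mono_base[OF t0(1) t0(2) r] by simp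
      have d1: "((\<lambda>t. t powr \<rho> - \<tau> powr \<rho>) has_real_derivative (\<rho> * t powr (\<rho> - 1))) (at t)"
        using t0 by (auto intro!: derivative_eq_intros)
      have d2: "((\<lambda>t. (t powr \<rho> - \<tau> powr \<rho>) powr (1-\<alpha>)) has_real_derivative
               (1-\<alpha>) * (t powr \<rho> - \<tau> powr \<rho>) powr (1-\<alpha>-1) * (\<rho> * t powr (\<rho> - 1))) (at t)"
        using DERIV_fun_powr[OF d1 pos, of "1-\<alpha>"] by simp
      have d3: "(A has_real_derivative ((1-\<alpha>) * (t powr \<rho> - \<tau> powr \<rho>) powr (1-\<alpha>-1) * (\<rho> * t powr (\<rho> - 1))) / (\<rho>*(1-\<alpha>))) (at t)"
        unfolding A_def using DERIV_cdivide[OF d2, of "\<rho>*(1-\<alpha>)"] by simp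
      have "((1-\<alpha>) * (t powr \<rho> - \<tau> powr \<rho>) powr (1-\<alpha>-1) * (\<rho> * t powr (\<rho> - 1))) / (\<rho>*(1-\<alpha>))
            = t powr (\<rho> - 1) * kk \<alpha> \<rho> t \<tau>"
        using al r by (simp add: kk_def field_simps)
      with d3 show ?thesis by (simp add: has_real_derivative_iff_has_vector_derivative[symmetric])
    qed
  qed
  moreover have "A b - A \<tau> = (b powr \<rho> - \<tau> powr \<rho>) powr (1-\<alpha>) / (\<rho>*(1-\<alpha>))"
    unfolding A_def using al by (simp add: field_simps)
  ultimately show ?thesis by simp
qed

lemma abs_int_cont_prod:
  fixes \<psi> g :: "real \<Rightarrow> real"
  assumes "continuous_on {p..q} \<psi>" "g absolutely_integrable_on {p..q}"
  shows "(\<lambda>x. \<psi> x * g x) absolutely_integrable_on {p..q}"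
proof (rule absolutely_integrable_bounded_measurable_product_real)
  show "\<psi> \<in> borel_measurable (lebesgue_on {p..q})"
    using assms(1) by (intro continuous_imp_measurable_on_sets_lebesgue) auto
  show "bounded (\<psi> ` {p..q})"
    using assms(1) by (intro compact_imp_bounded compact_continuous_image) auto
qed (use assms in auto)

lemma weight_lower_absint:
  assumes a: "0 < a" "a \<le> s" "s \<le> t" and al: "0 < \<alpha>" "\<alpha> < 1" and r: "0 < \<rho>"
  shows "(\<lambda>\<tau>. \<tau> powr (\<rho>-1) * kk \<alpha> \<rho> t \<tau>) absolutely_integrable_on {a..s}"
  using W_lower[OF a al r] by (intro nonnegative_absolutely_integrable_1) (auto simp: kk_nonneg)

lemma weight_upper_absint:
  assumes a: "0 < \<tau>" "\<tau> \<le> b" and al: "0 < \<alpha>" "\<alpha> < 1" and r: "0 < \<rho>"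
  shows "(\<lambda>t. t powr (\<rho>-1) * kk \<alpha> \<rho> t \<tau>) absolutely_integrable_on {\<tau>..b}"
  using W_upper[OF a al r] by (intro nonnegative_absolutely_integrable_1) (auto simp: kk_nonneg)

lemma wlower_absint:
  assumes a: "0 < a" "a \<le> s" "s \<le> t" and al: "0 < \<alpha>" "\<alpha> < 1" and r: "0 < \<rho>"
    and c: "continuous_on {a..s} \<psi>"
  shows "(\<lambda>\<tau>. \<tau> powr (\<rho>-1) * kk \<alpha> \<rho> t \<tau> * \<psi> \<tau>) absolutely_integrable_on {a..s}"
  using abs_int_cont_prod[OF c weight_lower_absint[OF a al r]] by (simp add: mult_ac)

lemma lower_absint:
  assumes a: "0 < a" "a \<le> s" "s \<le> t" and al: "0 < \<alpha>" "\<alpha> < 1" and r: "0 < \<rho>"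
    and c: "continuous_on {a..s} \<phi>"
  shows "(\<lambda>\<tau>. kk \<alpha> \<rho> t \<tau> * \<phi> \<tau>) absolutely_integrable_on {a..s}"
proof -
  have c2: "continuous_on {a..s} (\<lambda>\<tau>. \<tau> powr (1-\<rho>) * \<phi> \<tau>)"
    using a by (intro continuous_intros c) auto
  have A: "(\<lambda>\<tau>. (\<tau> powr (1-\<rho>) * \<phi> \<tau>) * (\<tau> powr (\<rho>-1) * kk \<alpha> \<rho> t \<tau>)) absolutely_integrable_on {a..s}"
    by (rule abs_int_cont_prod[OF c2 weight_lower_absint[OF a al r]])
  have E: "(\<tau> powr (1-\<rho>) * \<phi> \<tau>) * (\<tau> powr (\<rho>-1) * kk \<alpha> \<rho> t \<tau>) = kk \<alpha> \<rho> t \<tau> * \<phi> \<tau>"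
    if "\<tau> \<in> {a..s}" for \<tau>
  proof -
    have "\<tau> powr (1-\<rho>) * \<tau> powr (\<rho>-1) = 1" using that a by (simp add: powr_add[symmetric])
    then show ?thesis by (metis (no_types, lifting) mult.commute mult.left_commute mult_1)
  qed
  show ?thesis
    by (rule absolutely_integrable_spike[OF A negligible_empty]) (use E in auto)
qed

lemma upper_absint:
  assumes a: "0 < \<tau>" "\<tau> \<le> b" and al: "0 < \<alpha>" "\<alpha> < 1" and r: "0 < \<rho>"
    and c: "continuous_on {\<tau>..b} f"
  shows "(\<lambda>t. kk \<alpha> \<rho> t \<tau> * f t) absolutely_integrable_on {\<tau>..b}"
proof -
  have c2: "continuous_on {\<tau>..b} (\<lambda>t. t powr (1-\<rho>) * f t)"
    using a by (intro continuous_intros c) auto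
  have A: "(\<lambda>t. (t powr (1-\<rho>) * f t) * (t powr (\<rho>-1) * kk \<alpha> \<rho> t \<tau>)) absolutely_integrable_on {\<tau>..b}"
    by (rule abs_int_cont_prod[OF c2 weight_upper_absint[OF a al r]])
  have E: "(t powr (1-\<rho>) * f t) * (t powr (\<rho>-1) * kk \<alpha> \<rho> t \<tau>) = kk \<alpha> \<rho> t \<tau> * f t"
    if "t \<in> {\<tau>..b}" for t
  proof -
    have "t powr (1-\<rho>) * t powr (\<rho>-1) = 1" using that a by (simp add: powr_add[symmetric])
    then show ?thesis by (metis (no_types, lifting) mult.commute mult.left_commute mult_1)
  qed
  show ?thesis
    by (rule absolutely_integrable_spike[OF A negligible_empty]) (use E in auto)
qed

lemma absint_integrable: fixes f :: "real \<Rightarrow> real" shows "f absolutely_integrable_on S \<Longrightarrow> f integrable_on S"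
  by (rule set_lebesgue_integral_eq_integral(1))

lemma bound_open:
  fixes f g :: "real \<Rightarrow> real"
  assumes "f integrable_on {p..q}" "g integrable_on {p..q}" "\<And>x. x \<in> {p<..<q} \<Longrightarrow> \<bar>f x\<bar> \<le> g x"
  shows "\<bar>integral {p..q} f\<bar> \<le> integral {p..q} g"
proof -
  have "norm (integral {p<..<q} f) \<le> integral {p<..<q} g"
    using assms by (intro Henstock_Kurzweil_Integration.integral_norm_bound_integral)
      (auto simp: integrable_on_open_interval_real)
  then show ?thesis by (simp add: integral_open_interval_real[symmetric])
qed

lemma kk_anti:
  assumes "0 < \<tau>" "\<tau> < s" "s \<le> t" "0 < \<alpha>" "0 < \<rho>"
  shows "kk \<alpha> \<rho> t \<tau> \<le> kk \<alpha> \<rho> s \<tau>"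
proof -
  have p: "0 < s powr \<rho> - \<tau> powr \<rho>" using powr_strict_mono_base[of \<tau> s \<rho>] assms by simp
  have "s powr \<rho> \<le> t powr \<rho>" using assms by (intro powr_mono2) auto
  then have "(t powr \<rho> - \<tau> powr \<rho>) powr (-\<alpha>) \<le> (s powr \<rho> - \<tau> powr \<rho>) powr (-\<alpha>)"
    using p assms by (intro powr_mono2') auto
  then show ?thesis by (simp add: kk_def)
qed
lemma V_cont:
  assumes a: "0 < a" "a \<le> b" and al: "0 < \<alpha>" "\<alpha> < 1" and r: "0 < \<rho>"
    and c: "continuous_on {a..b} \<psi>"
  shows "continuous_on {a..b} (\<lambda>t. integral {a..t} (\<lambda>\<tau>. \<tau> powr (\<rho>-1) * kk \<alpha> \<rho> t \<tau> * \<psi> \<tau>))"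
proof -
  define V where "V t = integral {a..t} (\<lambda>\<tau>. \<tau> powr (\<rho>-1) * kk \<alpha> \<rho> t \<tau> * \<psi> \<tau>)" for t
  define w where "w \<tau> = \<tau> powr (\<rho>-1)" for \<tau> :: real
  obtain M where M: "M > 0" "\<And>\<tau>. \<tau> \<in> {a..b} \<Longrightarrow> \<bar>\<psi> \<tau>\<bar> \<le> M"
  proof -
    have "bounded (\<psi> ` {a..b})" using c by (intro compact_imp_bounded compact_continuous_image) auto
    then obtain M where "M > 0" "\<And>y. y \<in> \<psi> ` {a..b} \<Longrightarrow> norm y \<le> M" by (auto simp: bounded_pos)
    then show ?thesis using that by auto
  qed
  define \<beta> where "\<beta> = 1 - \<alpha>"
  have \<beta>: "0 < \<beta>" using al by (simp add: \<beta>_def)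
  define E where "E x = (x powr \<rho> - a powr \<rho>) powr \<beta>" for x
  define Bd where "Bd s t = M / (\<rho>*\<beta>) * (\<bar>E t - E s\<bar> + 2 * \<bar>t powr \<rho> - s powr \<rho>\<bar> powr \<beta>)" for s t
  have key: "\<bar>V t - V s\<bar> \<le> Bd s t" if st: "a \<le> s" "s \<le> t" "t \<le> b" for s t
  proof -
    have cs: "continuous_on {a..s} \<psi>" "continuous_on {a..t} \<psi>" "continuous_on {s..t} \<psi>"
      using st by (auto intro: continuous_on_subset[OF c])
    have it_t: "(\<lambda>\<tau>. w \<tau> * kk \<alpha> \<rho> t \<tau> * \<psi> \<tau>) integrable_on {a..t}"
      unfolding w_def using a st by (intro absint_integrable[OF wlower_absint[OF a(1) _ order.refl al r cs(2)]]) auto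
    have it_ts: "(\<lambda>\<tau>. w \<tau> * kk \<alpha> \<rho> t \<tau> * \<psi> \<tau>) integrable_on {a..s}"
      unfolding w_def by (rule absint_integrable[OF wlower_absint[OF a(1) st(1) st(2) al r cs(1)]])
    have it_ss: "(\<lambda>\<tau>. w \<tau> * kk \<alpha> \<rho> s \<tau> * \<psi> \<tau>) integrable_on {a..s}"
      unfolding w_def by (rule absint_integrable[OF wlower_absint[OF a(1) st(1) order.refl al r cs(1)]])
    have it_st: "(\<lambda>\<tau>. w \<tau> * kk \<alpha> \<rho> t \<tau> * \<psi> \<tau>) integrable_on {s..t}"
      unfolding w_def using a st by (intro absint_integrable[OF wlower_absint[OF _ st(2) order.refl al r cs(3)]]) auto
    have hW: "((\<lambda>\<tau>. w \<tau> * kk \<alpha> \<rho> t' \<tau>) has_integral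
       ((t' powr \<rho> - p powr \<rho>) powr \<beta> - (t' powr \<rho> - s' powr \<rho>) powr \<beta>) / (\<rho>*\<beta>)) {p..s'}"
      if "0 < p" "p \<le> s'" "s' \<le> t'" for p s' t'
      using W_lower[OF that al r] unfolding w_def \<beta>_def .
    have Vt: "V t = integral {a..s} (\<lambda>\<tau>. w \<tau> * kk \<alpha> \<rho> t \<tau> * \<psi> \<tau>) + integral {s..t} (\<lambda>\<tau>. w \<tau> * kk \<alpha> \<rho> t \<tau> * \<psi> \<tau>)"
      unfolding V_def w_def using Henstock_Kurzweil_Integration.integral_combine[OF st(1,2) it_t[unfolded w_def]] by simp
    have D1: "integral {a..s} (\<lambda>\<tau>. w \<tau> * kk \<alpha> \<rho> t \<tau> * \<psi> \<tau>) - V s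
        = integral {a..s} (\<lambda>\<tau>. w \<tau> * kk \<alpha> \<rho> t \<tau> * \<psi> \<tau> - w \<tau> * kk \<alpha> \<rho> s \<tau> * \<psi> \<tau>)"
      unfolding V_def w_def using integral_diff[OF it_ts it_ss, unfolded w_def] by simp
    have g1: "((\<lambda>\<tau>. M * (w \<tau> * kk \<alpha> \<rho> s \<tau>) - M * (w \<tau> * kk \<alpha> \<rho> t \<tau>)) has_integral
        M * (E s / (\<rho>*\<beta>)) - M * ((E t - (t powr \<rho> - s powr \<rho>) powr \<beta>) / (\<rho>*\<beta>))) {a..s}"
      using has_integral_diff[OF has_integral_mult_right[OF hW[OF a(1) st(1) order.refl]]
          has_integral_mult_right[OF hW[OF a(1) st(1) st(2)]], of M M] \<beta>
      by (simp add: E_def)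
    have b1: "\<bar>integral {a..s} (\<lambda>\<tau>. w \<tau> * kk \<alpha> \<rho> t \<tau> * \<psi> \<tau> - w \<tau> * kk \<alpha> \<rho> s \<tau> * \<psi> \<tau>)\<bar>
        \<le> M * (E s / (\<rho>*\<beta>)) - M * ((E t - (t powr \<rho> - s powr \<rho>) powr \<beta>) / (\<rho>*\<beta>))"
    proof -
      have "\<bar>integral {a..s} (\<lambda>\<tau>. w \<tau> * kk \<alpha> \<rho> t \<tau> * \<psi> \<tau> - w \<tau> * kk \<alpha> \<rho> s \<tau> * \<psi> \<tau>)\<bar>
          \<le> integral {a..s} (\<lambda>\<tau>. M * (w \<tau> * kk \<alpha> \<rho> s \<tau>) - M * (w \<tau> * kk \<alpha> \<rho> t \<tau>))"
      proof (rule bound_open)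
        show "(\<lambda>\<tau>. w \<tau> * kk \<alpha> \<rho> t \<tau> * \<psi> \<tau> - w \<tau> * kk \<alpha> \<rho> s \<tau> * \<psi> \<tau>) integrable_on {a..s}"
          using it_ts it_ss by (rule integrable_diff)
        show "(\<lambda>\<tau>. M * (w \<tau> * kk \<alpha> \<rho> s \<tau>) - M * (w \<tau> * kk \<alpha> \<rho> t \<tau>)) integrable_on {a..s}"
          using g1 by blast
        fix \<tau> assume "\<tau> \<in> {a<..<s}"
        then have \<tau>: "0 < \<tau>" "\<tau> < s" "\<tau> \<in> {a..b}" using a st by auto
        have "kk \<alpha> \<rho> t \<tau> \<le> kk \<alpha> \<rho> s \<tau>" using kk_anti[OF \<tau>(1,2) st(2) al(1) r] .
        moreover have "w \<tau> \<ge> 0" unfolding w_def by simp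
        moreover have "\<bar>\<psi> \<tau>\<bar> \<le> M" using M \<tau> by auto
        ultimately show "\<bar>w \<tau> * kk \<alpha> \<rho> t \<tau> * \<psi> \<tau> - w \<tau> * kk \<alpha> \<rho> s \<tau> * \<psi> \<tau>\<bar>
            \<le> M * (w \<tau> * kk \<alpha> \<rho> s \<tau>) - M * (w \<tau> * kk \<alpha> \<rho> t \<tau>)"
        proof -
          assume h: "kk \<alpha> \<rho> t \<tau> \<le> kk \<alpha> \<rho> s \<tau>" "0 \<le> w \<tau>" "\<bar>\<psi> \<tau>\<bar> \<le> M"
          have "w \<tau> * kk \<alpha> \<rho> t \<tau> * \<psi> \<tau> - w \<tau> * kk \<alpha> \<rho> s \<tau> * \<psi> \<tau>
               = - ((w \<tau> * (kk \<alpha> \<rho> s \<tau> - kk \<alpha> \<rho> t \<tau>)) * \<psi> \<tau>)"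
            by (simp add: algebra_simps)
          then have "\<bar>w \<tau> * kk \<alpha> \<rho> t \<tau> * \<psi> \<tau> - w \<tau> * kk \<alpha> \<rho> s \<tau> * \<psi> \<tau>\<bar>
               = (w \<tau> * (kk \<alpha> \<rho> s \<tau> - kk \<alpha> \<rho> t \<tau>)) * \<bar>\<psi> \<tau>\<bar>"
            using h by (simp only: abs_minus_cancel abs_mult abs_of_nonneg)
          also have "\<dots> \<le> (w \<tau> * (kk \<alpha> \<rho> s \<tau> - kk \<alpha> \<rho> t \<tau>)) * M"
            using h by (intro mult_left_mono) auto
          finally show ?thesis by (simp add: algebra_simps)
        qed
      qed
      also have "\<dots> = M * (E s / (\<rho>*\<beta>)) - M * ((E t - (t powr \<rho> - s powr \<rho>) powr \<beta>) / (\<rho>*\<beta>))"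
        using g1 by (rule integral_unique)
      finally show ?thesis .
    qed
    have g2: "((\<lambda>\<tau>. M * (w \<tau> * kk \<alpha> \<rho> t \<tau>)) has_integral M * ((t powr \<rho> - s powr \<rho>) powr \<beta> / (\<rho>*\<beta>))) {s..t}"
      using has_integral_mult_right[OF hW[of s t t], of M] a st by simp
    have b2: "\<bar>integral {s..t} (\<lambda>\<tau>. w \<tau> * kk \<alpha> \<rho> t \<tau> * \<psi> \<tau>)\<bar> \<le> M * ((t powr \<rho> - s powr \<rho>) powr \<beta> / (\<rho>*\<beta>))"
    proof -
      have "\<bar>integral {s..t} (\<lambda>\<tau>. w \<tau> * kk \<alpha> \<rho> t \<tau> * \<psi> \<tau>)\<bar> \<le> integral {s..t} (\<lambda>\<tau>. M * (w \<tau> * kk \<alpha> \<rho> t \<tau>))"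
      proof (rule bound_open)
        show "(\<lambda>\<tau>. M * (w \<tau> * kk \<alpha> \<rho> t \<tau>)) integrable_on {s..t}" using g2 by blast
        fix \<tau> assume "\<tau> \<in> {s<..<t}"
        then have \<tau>: "\<tau> \<in> {a..b}" using st by auto
        have "\<bar>\<psi> \<tau>\<bar> \<le> M" using M \<tau> by auto
        moreover have "w \<tau> * kk \<alpha> \<rho> t \<tau> \<ge> 0" unfolding w_def by (simp add: kk_nonneg)
        ultimately show "\<bar>w \<tau> * kk \<alpha> \<rho> t \<tau> * \<psi> \<tau>\<bar> \<le> M * (w \<tau> * kk \<alpha> \<rho> t \<tau>)"
        proof -
          assume h: "\<bar>\<psi> \<tau>\<bar> \<le> M" "w \<tau> * kk \<alpha> \<rho> t \<tau> \<ge> 0"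
          have "\<bar>w \<tau> * kk \<alpha> \<rho> t \<tau> * \<psi> \<tau>\<bar> = (w \<tau> * kk \<alpha> \<rho> t \<tau>) * \<bar>\<psi> \<tau>\<bar>"
            by (simp only: abs_mult[of "w \<tau> * kk \<alpha> \<rho> t \<tau>" "\<psi> \<tau>"] abs_of_nonneg[OF h(2)])
          also have "\<dots> \<le> (w \<tau> * kk \<alpha> \<rho> t \<tau>) * M" using h by (intro mult_left_mono)
          finally show ?thesis by (simp add: mult.commute)
        qed
      qed (rule it_st)
      also have "\<dots> = M * ((t powr \<rho> - s powr \<rho>) powr \<beta> / (\<rho>*\<beta>))"
        using g2 by (rule integral_unique)
      finally show ?thesis .
    qed
    have "\<bar>V t - V s\<bar> \<le> \<bar>integral {a..s} (\<lambda>\<tau>. w \<tau> * kk \<alpha> \<rho> t \<tau> * \<psi> \<tau>) - V s\<bar> + \<bar>integral {s..t} (\<lambda>\<tau>. w \<tau> * kk \<alpha> \<rho> t \<tau> * \<psi> \<tau>)\<bar>"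
      unfolding Vt by linarith
    also have "\<dots> \<le> (M * (E s / (\<rho>*\<beta>)) - M * ((E t - (t powr \<rho> - s powr \<rho>) powr \<beta>) / (\<rho>*\<beta>)))
                    + M * ((t powr \<rho> - s powr \<rho>) powr \<beta> / (\<rho>*\<beta>))"
      using b1 b2 unfolding D1 by linarith
    also have "\<dots> = M / (\<rho>*\<beta>) * (E s - E t + 2 * (t powr \<rho> - s powr \<rho>) powr \<beta>)"
      using r \<beta> by (simp add: field_simps)
    also have "\<dots> \<le> Bd s t"
    proof -
      have "s powr \<rho> \<le> t powr \<rho>" using st a r by (intro powr_mono2) auto
      then have "(t powr \<rho> - s powr \<rho>) = \<bar>t powr \<rho> - s powr \<rho>\<bar>" by simp
      moreover have "E s - E t \<le> \<bar>E t - E s\<bar>" by simp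
      ultimately show ?thesis unfolding Bd_def using M r \<beta>
        by (intro mult_left_mono) auto
    qed
    finally show ?thesis .
  qed
  have key2: "\<bar>V t - V s\<bar> \<le> Bd s t" if "s \<in> {a..b}" "t \<in> {a..b}" for s t
  proof (cases "s \<le> t")
    case True then show ?thesis using key that by auto
  next
    case False
    then have "\<bar>V s - V t\<bar> \<le> Bd t s" using key that by auto
    moreover have "Bd t s = Bd s t" unfolding Bd_def by (simp add: abs_minus_commute)
    ultimately show ?thesis by (simp add: abs_minus_commute)
  qed
  have Econt: "continuous_on {a..b} E"
    unfolding E_def
    by (rule continuous_on_powr') (use a r \<beta> in \<open>auto intro!: continuous_intros powr_mono2\<close>)
  show ?thesis
    unfolding V_def[symmetric] continuous_on_def
  proof
    fix s assume s: "s \<in> {a..b}"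
    have lim: "((\<lambda>t. Bd s t) \<longlongrightarrow> Bd s s) (at s within {a..b})"
    proof -
      have "(E \<longlongrightarrow> E s) (at s within {a..b})" using Econt s by (simp add: continuous_on_def)
      then have l1: "((\<lambda>t. \<bar>E t - E s\<bar>) \<longlongrightarrow> \<bar>E s - E s\<bar>) (at s within {a..b})"
        by (intro tendsto_rabs tendsto_diff tendsto_const)
      have l0: "((\<lambda>t. \<bar>t powr \<rho> - s powr \<rho>\<bar>) \<longlongrightarrow> \<bar>s powr \<rho> - s powr \<rho>\<bar>) (at s within {a..b})"
        using s a by (intro tendsto_intros) auto
      have l2: "((\<lambda>t. \<bar>t powr \<rho> - s powr \<rho>\<bar> powr \<beta>) \<longlongrightarrow> \<bar>s powr \<rho> - s powr \<rho>\<bar> powr \<beta>) (at s within {a..b})"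
        by (rule tendsto_powr'[OF l0 tendsto_const]) (use \<beta> in auto)
      show ?thesis
        using tendsto_mult_left[OF tendsto_add[OF l1 tendsto_mult_left[OF l2, of 2]], of "M/(\<rho>*\<beta>)"]
        by (simp add: Bd_def)
    qed
    have "Bd s s = 0" unfolding Bd_def by simp
    with lim have "((\<lambda>t. Bd s t) \<longlongrightarrow> 0) (at s within {a..b})" by simp
    then have "((\<lambda>t. V t - V s) \<longlongrightarrow> 0) (at s within {a..b})"
      by (rule Lim_null_comparison[rotated])
        (use key2 s in \<open>auto simp: eventually_at_filter\<close>)
    then show "(V \<longlongrightarrow> V s) (at s within {a..b})" by (simp add: Lim_null[symmetric])
  qed
qed

lemma U_cont:
  assumes a: "0 < a" "a \<le> b" and al: "0 < \<alpha>" "\<alpha> < 1" and r: "0 < \<rho>"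
    and c: "continuous_on {a..b} \<phi>"
  shows "continuous_on {a..b} (\<lambda>t. integral {a..t} (\<lambda>\<tau>. kk \<alpha> \<rho> t \<tau> * \<phi> \<tau>))"
proof -
  have c2: "continuous_on {a..b} (\<lambda>\<tau>. \<tau> powr (1-\<rho>) * \<phi> \<tau>)"
    using a by (intro continuous_intros c) auto
  have e: "integral {a..t} (\<lambda>\<tau>. kk \<alpha> \<rho> t \<tau> * \<phi> \<tau>)
      = integral {a..t} (\<lambda>\<tau>. \<tau> powr (\<rho>-1) * kk \<alpha> \<rho> t \<tau> * (\<tau> powr (1-\<rho>) * \<phi> \<tau>))" for t
  proof (rule integral_cong)
    fix \<tau> assume "\<tau> \<in> {a..t}"
    then have "\<tau> powr (\<rho>-1) * \<tau> powr (1-\<rho>) = 1" using a by (simp add: powr_add[symmetric])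
    then show "kk \<alpha> \<rho> t \<tau> * \<phi> \<tau> = \<tau> powr (\<rho>-1) * kk \<alpha> \<rho> t \<tau> * (\<tau> powr (1-\<rho>) * \<phi> \<tau>)"
      by (metis (no_types, lifting) mult.commute mult.left_commute mult_1)
  qed
  show ?thesis unfolding e by (rule V_cont[OF a al r c2])
qed

lemma caputo_rep:
  assumes ab: "a < b" and d: "\<forall>t\<in>{a..b}. (y has_real_derivative y' t) (at t within {a..b})"
    and t: "t \<in> {a..b}"
  shows "caputo_left a \<alpha> \<rho> y t = \<rho> powr \<alpha> / Gamma (1 - \<alpha>) * integral {a..t} (\<lambda>\<tau>. kk \<alpha> \<rho> t \<tau> * y' \<tau>)"
proof -
  have "integral {a..t} (\<lambda>\<tau>. (t powr \<rho> - \<tau> powr \<rho>) powr (- \<alpha>) * deriv y \<tau>)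
      = integral {a..t} (\<lambda>\<tau>. kk \<alpha> \<rho> t \<tau> * y' \<tau>)"
  proof (rule integral_spike[of "{a,b}"])
    fix \<tau> assume \<tau>: "\<tau> \<in> {a..t} - {a,b}"
    then have "\<tau> \<in> {a<..<b}" using t by auto
    then have "at \<tau> within {a..b} = at \<tau>" by (intro at_within_interior) auto
    then have "(y has_real_derivative y' \<tau>) (at \<tau>)" using d \<tau> t by (metis DiffD1 atLeastAtMost_iff order_trans)
    then have "deriv y \<tau> = y' \<tau>" by (rule DERIV_imp_deriv)
    then show "kk \<alpha> \<rho> t \<tau> * y' \<tau> = (t powr \<rho> - \<tau> powr \<rho>) powr (- \<alpha>) * deriv y \<tau>"
      by (simp add: kk_def)
  qed simp
  then show ?thesis unfolding caputo_left_def by simp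
qed

lemma conv_lborel:
  fixes g :: "real \<Rightarrow> real"
  assumes ai: "g absolutely_integrable_on {p..q}"
    and m: "(\<lambda>x. indicator {p..q} x * g x) \<in> borel_measurable lborel"
  shows "integrable lborel (\<lambda>x. indicator {p..q} x * g x)"
    "(\<integral>x. indicator {p..q} x * g x \<partial>lborel) = integral {p..q} g"
proof -
  have i: "integrable lebesgue (\<lambda>x. indicator {p..q} x * g x)"
    using ai by (simp add: set_integrable_def)
  show "integrable lborel (\<lambda>x. indicator {p..q} x * g x)"
    using i integrable_completion[OF m] by simp
  have "(\<integral>x. indicator {p..q} x * g x \<partial>lebesgue) = (\<integral>x. indicator {p..q} x * g x \<partial>lborel)"
    by (rule integral_completion[OF m])
  moreover have "(\<integral>x. indicator {p..q} x * g x \<partial>lebesgue) = integral {p..q} g"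
    using set_lebesgue_integral_eq_integral(2)[OF ai] by (simp add: set_lebesgue_integral_def)
  ultimately show "(\<integral>x. indicator {p..q} x * g x \<partial>lborel) = integral {p..q} g" by simp
qed

lemma outer_lborel:
  fixes H :: "real \<Rightarrow> real"
  assumes "integrable lborel (\<lambda>x. indicator {p..q} x * H x)"
  shows "(\<integral>x. indicator {p..q} x * H x \<partial>lborel) = integral {p..q} H"
proof -
  have e: "(\<lambda>x. indicator {p..q} x * H x) = (\<lambda>x. if x \<in> {p..q} then H x else 0)"
    by (auto simp: indicator_def)
  show ?thesis using integral_lborel[OF assms] unfolding e integral_restrict_UNIV by simp
qed

lemma fubini_kk:
  assumes a: "0 < a" "a \<le> b" and al: "0 < \<alpha>" "\<alpha> < 1" and r: "0 < \<rho>"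
    and cf: "continuous_on {a..b} f" and cp: "continuous_on {a..b} \<phi>"
  shows "integral {a..b} (\<lambda>t. f t * integral {a..t} (\<lambda>\<tau>. kk \<alpha> \<rho> t \<tau> * \<phi> \<tau>))
       = integral {a..b} (\<lambda>\<tau>. \<phi> \<tau> * integral {\<tau>..b} (\<lambda>t. kk \<alpha> \<rho> t \<tau> * f t))"
proof -
  define F where "F t = indicator {a..b} t * f t" for t
  define P where "P t = indicator {a..b} t * \<phi> t" for t
  have mF[measurable]: "F \<in> borel_measurable borel"
    using borel_measurable_continuous_on_indicator[OF _ cf] unfolding F_def by simp
  have mP[measurable]: "P \<in> borel_measurable borel"
    using borel_measurable_continuous_on_indicator[OF _ cp] unfolding P_def by simp
  define G where "G p = (if a \<le> snd p \<and> snd p \<le> fst p then kk \<alpha> \<rho> (fst p) (snd p) else 0) * F (fst p) * P (snd p)"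
    for p :: "real \<times> real"
  have mG[measurable]: "G \<in> borel_measurable (lborel \<Otimes>\<^sub>M lborel)"
    unfolding G_def kk_def by measurable
  have secT: "(\<lambda>\<tau>. G (t,\<tau>)) = (\<lambda>\<tau>. indicator {a..t} \<tau> * (kk \<alpha> \<rho> t \<tau> * \<phi> \<tau> * f t))"
    if "t \<in> {a..b}" for t
    using that by (auto simp: G_def F_def P_def indicator_def fun_eq_iff)
  have secT0: "G (t,\<tau>) = 0" if "t \<notin> {a..b}" for t \<tau>
    using that by (auto simp: G_def F_def P_def indicator_def)
  have secS: "(\<lambda>t. G (t,\<tau>)) = (\<lambda>t. indicator {\<tau>..b} t * (kk \<alpha> \<rho> t \<tau> * f t * \<phi> \<tau>))"
    if "\<tau> \<in> {a..b}" for \<tau>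
    using that by (auto simp: G_def F_def P_def indicator_def fun_eq_iff)
  have secS0: "G (t,\<tau>) = 0" if "\<tau> \<notin> {a..b}" for t \<tau>
    using that by (auto simp: G_def F_def P_def indicator_def)
  have mT: "(\<lambda>\<tau>. G (t,\<tau>)) \<in> borel_measurable lborel" for t
    by (rule measurable_Pair2[OF mG]) simp
  have mS: "(\<lambda>t. G (t,\<tau>)) \<in> borel_measurable lborel" for \<tau>
    by (rule measurable_Pair1[OF mG]) simp
  have aiT: "(\<lambda>\<tau>. kk \<alpha> \<rho> t \<tau> * \<phi> \<tau> * f t) absolutely_integrable_on {a..t}" if "t \<in> {a..b}" for t
    using lower_absint[OF a(1) _ order.refl al r, of t \<phi>] that
      continuous_on_subset[OF cp, of "{a..t}"] by (intro set_integrable_mult_left) auto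
  have aiS: "(\<lambda>t. kk \<alpha> \<rho> t \<tau> * f t * \<phi> \<tau>) absolutely_integrable_on {\<tau>..b}" if "\<tau> \<in> {a..b}" for \<tau>
    using upper_absint[of \<tau> b \<alpha> \<rho> f] that a al r
      continuous_on_subset[OF cf, of "{\<tau>..b}"] by (intro set_integrable_mult_left) auto
  have innerT: "(\<integral>\<tau>. G (t,\<tau>) \<partial>lborel) = indicator {a..b} t * (f t * integral {a..t} (\<lambda>\<tau>. kk \<alpha> \<rho> t \<tau> * \<phi> \<tau>))" for t
  proof (cases "t \<in> {a..b}")
    case True
    have "(\<integral>\<tau>. G (t,\<tau>) \<partial>lborel) = integral {a..t} (\<lambda>\<tau>. kk \<alpha> \<rho> t \<tau> * \<phi> \<tau> * f t)"
      using conv_lborel(2)[OF aiT[OF True]] mT[of t] unfolding secT[OF True] by simp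
    then show ?thesis using True by (simp add: integral_mult_left)
  next
    case False then show ?thesis by (simp add: secT0)
  qed
  have innerS: "(\<integral>t. G (t,\<tau>) \<partial>lborel) = indicator {a..b} \<tau> * (\<phi> \<tau> * integral {\<tau>..b} (\<lambda>t. kk \<alpha> \<rho> t \<tau> * f t))" for \<tau>
  proof (cases "\<tau> \<in> {a..b}")
    case True
    have "(\<integral>t. G (t,\<tau>) \<partial>lborel) = integral {\<tau>..b} (\<lambda>t. kk \<alpha> \<rho> t \<tau> * f t * \<phi> \<tau>)"
      using conv_lborel(2)[OF aiS[OF True]] mS[of \<tau>] unfolding secS[OF True] by simp
    then show ?thesis using True by (simp add: integral_mult_left mult.commute)
  next
    case False then show ?thesis by (simp add: secS0)
  qed
  obtain Mf where Mf: "\<And>t. t \<in> {a..b} \<Longrightarrow> \<bar>f t\<bar> \<le> Mf"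
  proof -
    have "bounded (f ` {a..b})" using cf by (intro compact_imp_bounded compact_continuous_image) auto
    then obtain M where "\<forall>x\<in>{a..b}. \<bar>f x\<bar> \<le> M" by (auto simp: bounded_iff)
    then show ?thesis using that by blast
  qed
  have cabs: "continuous_on {a..b} (\<lambda>\<tau>. \<bar>\<phi> \<tau>\<bar>)" using cp by (intro continuous_intros)
  obtain B where B: "\<And>t. t \<in> {a..b} \<Longrightarrow> \<bar>integral {a..t} (\<lambda>\<tau>. kk \<alpha> \<rho> t \<tau> * \<bar>\<phi> \<tau>\<bar>)\<bar> \<le> B"
  proof -
    have "bounded ((\<lambda>t. integral {a..t} (\<lambda>\<tau>. kk \<alpha> \<rho> t \<tau> * \<bar>\<phi> \<tau>\<bar>)) ` {a..b})"
      using U_cont[OF a al r cabs] by (intro compact_imp_bounded compact_continuous_image) auto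
    then obtain M where "\<forall>x\<in>{a..b}. \<bar>integral {a..x} (\<lambda>\<tau>. kk \<alpha> \<rho> x \<tau> * \<bar>\<phi> \<tau>\<bar>)\<bar> \<le> M"
      by (auto simp: bounded_iff)
    then show ?thesis using that by blast
  qed
  have intG: "integrable (lborel \<Otimes>\<^sub>M lborel) G"
  proof (rule lborel_pair.Fubini_integrable)
    show "G \<in> borel_measurable (lborel \<Otimes>\<^sub>M lborel)" by (rule mG)
    show "AE x in lborel. integrable lborel (\<lambda>y. G (x, y))"
    proof (rule AE_I2)
      fix t
      show "integrable lborel (\<lambda>y. G (t, y))"
      proof (cases "t \<in> {a..b}")
        case True then show ?thesis using conv_lborel(1)[OF aiT[OF True]] mT[of t] unfolding secT[OF True] by simp
      next
        case False then show ?thesis by (simp add: secT0)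
      qed
    qed
    show "integrable lborel (\<lambda>x. \<integral>y. norm (G (x, y)) \<partial>lborel)"
    proof (rule Bochner_Integration.integrable_bound[where f="\<lambda>t. indicator {a..b} t * (Mf * B)"])
      show "integrable lborel (\<lambda>t. indicator {a..b} t * (Mf * B) :: real)"
        by (intro integrable_mult_left integrable_real_indicator) (auto simp: emeasure_lborel_Icc_eq)
      show "(\<lambda>x. \<integral>y. norm (G (x, y)) \<partial>lborel) \<in> borel_measurable lborel" by measurable
      show "AE x in lborel. norm (\<integral>y. norm (G (x, y)) \<partial>lborel) \<le> norm (indicator {a..b} x * (Mf * B) :: real)"
      proof (rule AE_I2)
        fix t
        show "norm (\<integral>y. norm (G (t, y)) \<partial>lborel) \<le> norm (indicator {a..b} t * (Mf * B) :: real)"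
        proof (cases "t \<in> {a..b}")
          case True
          have ai2: "(\<lambda>\<tau>. \<bar>kk \<alpha> \<rho> t \<tau> * \<phi> \<tau> * f t\<bar>) absolutely_integrable_on {a..t}"
            using aiT[OF True] by (rule set_integrable_abs)
          have eqn: "(\<lambda>y. norm (G (t, y))) = (\<lambda>\<tau>. indicator {a..t} \<tau> * \<bar>kk \<alpha> \<rho> t \<tau> * \<phi> \<tau> * f t\<bar>)"
            using secT[OF True] by (auto simp: fun_eq_iff indicator_def)
          have mm: "(\<lambda>y. norm (G (t, y))) \<in> borel_measurable lborel" using mT[of t] by measurable
          have I: "(\<integral>y. norm (G (t, y)) \<partial>lborel) = integral {a..t} (\<lambda>\<tau>. \<bar>kk \<alpha> \<rho> t \<tau> * \<phi> \<tau> * f t\<bar>)"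
            using conv_lborel(2)[OF ai2] mm unfolding eqn by simp
          have ai3: "(\<lambda>\<tau>. kk \<alpha> \<rho> t \<tau> * \<bar>\<phi> \<tau>\<bar>) absolutely_integrable_on {a..t}"
            using lower_absint[OF a(1) _ order.refl al r, of t "\<lambda>\<tau>. \<bar>\<phi> \<tau>\<bar>"] True
              continuous_on_subset[OF cabs, of "{a..t}"] by auto
          have le1: "integral {a..t} (\<lambda>\<tau>. \<bar>kk \<alpha> \<rho> t \<tau> * \<phi> \<tau> * f t\<bar>)
                 \<le> integral {a..t} (\<lambda>\<tau>. kk \<alpha> \<rho> t \<tau> * \<bar>\<phi> \<tau>\<bar> * Mf)"
          proof (rule integral_le)
            show "(\<lambda>\<tau>. \<bar>kk \<alpha> \<rho> t \<tau> * \<phi> \<tau> * f t\<bar>) integrable_on {a..t}"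
              using ai2 by (rule absint_integrable)
            show "(\<lambda>\<tau>. kk \<alpha> \<rho> t \<tau> * \<bar>\<phi> \<tau>\<bar> * Mf) integrable_on {a..t}"
              using absint_integrable[OF ai3] by (rule integrable_on_mult_left)
            fix \<tau>
            have "\<bar>kk \<alpha> \<rho> t \<tau> * \<phi> \<tau> * f t\<bar> = (kk \<alpha> \<rho> t \<tau> * \<bar>\<phi> \<tau>\<bar>) * \<bar>f t\<bar>"
              by (simp add: abs_mult kk_nonneg)
            also have "\<dots> \<le> (kk \<alpha> \<rho> t \<tau> * \<bar>\<phi> \<tau>\<bar>) * Mf"
              using Mf[OF True] by (intro mult_left_mono) (auto simp: kk_nonneg)
            finally show "\<bar>kk \<alpha> \<rho> t \<tau> * \<phi> \<tau> * f t\<bar> \<le> kk \<alpha> \<rho> t \<tau> * \<bar>\<phi> \<tau>\<bar> * Mf" .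
          qed
          have "integral {a..t} (\<lambda>\<tau>. kk \<alpha> \<rho> t \<tau> * \<bar>\<phi> \<tau>\<bar> * Mf) = integral {a..t} (\<lambda>\<tau>. kk \<alpha> \<rho> t \<tau> * \<bar>\<phi> \<tau>\<bar>) * Mf"
            by (rule integral_mult_left)
          also have "\<dots> \<le> B * Mf"
          proof -
            have "0 \<le> Mf" using Mf[OF True] by linarith
            then show ?thesis using B[OF True] by (intro mult_right_mono) auto
          qed
          finally have "(\<integral>y. norm (G (t, y)) \<partial>lborel) \<le> Mf * B" using I le1 by (simp add: mult.commute)
          moreover have "0 \<le> (\<integral>y. norm (G (t, y)) \<partial>lborel)" by simp
          ultimately show ?thesis using True by simp
        next
          case False then show ?thesis by (simp add: secT0)
        qed
      qed
    qed
  qed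
  have intG': "integrable (lborel \<Otimes>\<^sub>M lborel) (case_prod (\<lambda>t \<tau>. G (t,\<tau>)))"
    using intG by simp
  have fub: "(\<integral>\<tau>. (\<integral>t. G (t,\<tau>) \<partial>lborel) \<partial>lborel) = (\<integral>t. (\<integral>\<tau>. G (t,\<tau>) \<partial>lborel) \<partial>lborel)"
    by (rule lborel_pair.Fubini_integral[OF intG'])
  have i1: "integrable lborel (\<lambda>t. (\<integral>\<tau>. G (t,\<tau>) \<partial>lborel))"
    by (rule lborel_pair.integrable_fst[OF intG'])
  have i2: "integrable lborel (\<lambda>\<tau>. (\<integral>t. G (t,\<tau>) \<partial>lborel))"
    by (rule lborel_pair.integrable_snd[OF intG'])
  have L: "(\<integral>t. (\<integral>\<tau>. G (t,\<tau>) \<partial>lborel) \<partial>lborel)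
      = integral {a..b} (\<lambda>t. f t * integral {a..t} (\<lambda>\<tau>. kk \<alpha> \<rho> t \<tau> * \<phi> \<tau>))"
    using i1 unfolding innerT by (rule outer_lborel)
  have R: "(\<integral>\<tau>. (\<integral>t. G (t,\<tau>) \<partial>lborel) \<partial>lborel)
      = integral {a..b} (\<lambda>\<tau>. \<phi> \<tau> * integral {\<tau>..b} (\<lambda>t. kk \<alpha> \<rho> t \<tau> * f t))"
    using i2 unfolding innerS by (rule outer_lborel)
  show ?thesis using fub L R by simp
qed

lemma mvt_abs:
  fixes f f' :: "real \<Rightarrow> real"
  assumes d: "\<And>w. (f has_real_derivative f' w) (at w)"
  shows "\<exists>z. \<bar>z - x\<bar> \<le> \<bar>y - x\<bar> \<and> f y - f x = (y - x) * f' z"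
proof (cases x y rule: linorder_cases)
  case less
  then obtain z where "x < z" "z < y" "f y - f x = (y - x) * f' z"
    using MVT2[OF less, of f f'] d by blast
  then show ?thesis by (intro exI[of _ z]) auto
next
  case equal then show ?thesis by (intro exI[of _ x]) auto
next
  case greater
  then obtain z where z: "y < z" "z < x" "f x - f y = (x - y) * f' z"
    using MVT2[OF greater, of f f'] d by blast
  then have "f y - f x = (y - x) * f' z" by (simp add: algebra_simps)
  then show ?thesis using z by (intro exI[of _ z]) auto
qed

lemma dist_triple: "dist (t::real, x::real, y::real) (t, x', y') \<le> \<bar>x - x'\<bar> + \<bar>y - y'\<bar>"
proof -
  have "dist (t, x, y) (t, x', y') = sqrt ((dist x x')\<^sup>2 + (dist y y')\<^sup>2)"
    by (simp add: dist_Pair_Pair)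
  also have "\<dots> \<le> \<bar>dist x x'\<bar> + \<bar>dist y y'\<bar>" by (rule sqrt_sum_squares_le_sum_abs)
  finally show ?thesis by (simp add: dist_real_def)
qed

lemma first_var:
  fixes L P2 P3 :: "real \<Rightarrow> real \<Rightarrow> real \<Rightarrow> real" and u v p q :: "real \<Rightarrow> real"
  assumes ab: "a \<le> b"
    and d2: "\<And>t u v. t \<in> {a..b} \<Longrightarrow> ((\<lambda>w. L t w v) has_real_derivative P2 t u v) (at u)"
    and d3: "\<And>t u v. t \<in> {a..b} \<Longrightarrow> ((\<lambda>w. L t u w) has_real_derivative P3 t u v) (at v)"
    and c2: "continuous_on ({a..b} \<times> UNIV \<times> UNIV) (\<lambda>(t, u, v). P2 t u v)"
    and c3: "continuous_on ({a..b} \<times> UNIV \<times> UNIV) (\<lambda>(t, u, v). P3 t u v)"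
    and cu: "continuous_on {a..b} u" and cv: "continuous_on {a..b} v"
    and cp: "continuous_on {a..b} p" and cq: "continuous_on {a..b} q"
    and int: "\<And>\<epsilon>. (\<lambda>t. L t (u t + \<epsilon> * p t) (v t + \<epsilon> * q t)) integrable_on {a..b}"
  shows "((\<lambda>\<epsilon>. integral {a..b} (\<lambda>t. L t (u t + \<epsilon> * p t) (v t + \<epsilon> * q t))) has_real_derivative
          integral {a..b} (\<lambda>t. P2 t (u t) (v t) * p t + P3 t (u t) (v t) * q t)) (at 0)"
proof -
  define \<Phi> where "\<Phi> \<epsilon> = integral {a..b} (\<lambda>t. L t (u t + \<epsilon> * p t) (v t + \<epsilon> * q t))" for \<epsilon>
  define lim where "lim t = P2 t (u t) (v t) * p t + P3 t (u t) (v t) * q t" for t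
  define Q where "Q = integral {a..b} lim"
  have clim: "continuous_on {a..b} lim"
  proof -
    have "continuous_on {a..b} ((\<lambda>(t, u, v). P2 t u v) \<circ> (\<lambda>t. (t, u t, v t)))"
      by (rule continuous_on_compose[OF _ continuous_on_subset[OF c2]])
         (auto intro!: continuous_intros cu cv)
    moreover have "continuous_on {a..b} ((\<lambda>(t, u, v). P3 t u v) \<circ> (\<lambda>t. (t, u t, v t)))"
      by (rule continuous_on_compose[OF _ continuous_on_subset[OF c3]])
         (auto intro!: continuous_intros cu cv)
    ultimately show ?thesis unfolding lim_def o_def
      by (auto intro!: continuous_intros cp cq)
  qed
  have ilim: "lim integrable_on {a..b}" using clim by (rule integrable_continuous_real)
  obtain R where R: "R > 0" "\<And>t. t \<in> {a..b} \<Longrightarrow> \<bar>u t\<bar> \<le> R \<and> \<bar>v t\<bar> \<le> R \<and> \<bar>p t\<bar> \<le> R \<and> \<bar>q t\<bar> \<le> R"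
  proof -
    have bd: "\<exists>M. \<forall>t\<in>{a..b}. \<bar>g t\<bar> \<le> M" if "continuous_on {a..b} g" for g :: "real \<Rightarrow> real"
    proof -
      have "bounded (g ` {a..b})" using that by (intro compact_imp_bounded compact_continuous_image) auto
      then show ?thesis by (auto simp: bounded_iff)
    qed
    obtain M1 M2 M3 M4 where M: "\<forall>t\<in>{a..b}. \<bar>u t\<bar> \<le> M1" "\<forall>t\<in>{a..b}. \<bar>v t\<bar> \<le> M2"
      "\<forall>t\<in>{a..b}. \<bar>p t\<bar> \<le> M3" "\<forall>t\<in>{a..b}. \<bar>q t\<bar> \<le> M4"
      using bd[OF cu] bd[OF cv] bd[OF cp] bd[OF cq] by blast
    show ?thesis
    proof (rule that[of "1 + \<bar>M1\<bar> + \<bar>M2\<bar> + \<bar>M3\<bar> + \<bar>M4\<bar>"])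
      show "0 < 1 + \<bar>M1\<bar> + \<bar>M2\<bar> + \<bar>M3\<bar> + \<bar>M4\<bar>" by simp
      fix t assume t: "t \<in> {a..b}"
      have "\<bar>u t\<bar> \<le> M1" "\<bar>v t\<bar> \<le> M2" "\<bar>p t\<bar> \<le> M3" "\<bar>q t\<bar> \<le> M4" using M t by auto
      moreover have "M1 \<le> \<bar>M1\<bar>" "M2 \<le> \<bar>M2\<bar>" "M3 \<le> \<bar>M3\<bar>" "M4 \<le> \<bar>M4\<bar>"
        "0 \<le> \<bar>M1\<bar>" "0 \<le> \<bar>M2\<bar>" "0 \<le> \<bar>M3\<bar>" "0 \<le> \<bar>M4\<bar>" by auto
      ultimately show "\<bar>u t\<bar> \<le> 1 + \<bar>M1\<bar> + \<bar>M2\<bar> + \<bar>M3\<bar> + \<bar>M4\<bar> \<and> \<bar>v t\<bar> \<le> 1 + \<bar>M1\<bar> + \<bar>M2\<bar> + \<bar>M3\<bar> + \<bar>M4\<bar> \<and>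
          \<bar>p t\<bar> \<le> 1 + \<bar>M1\<bar> + \<bar>M2\<bar> + \<bar>M3\<bar> + \<bar>M4\<bar> \<and> \<bar>q t\<bar> \<le> 1 + \<bar>M1\<bar> + \<bar>M2\<bar> + \<bar>M3\<bar> + \<bar>M4\<bar>"
        by linarith
    qed
  qed
  define K where "K = {a..b} \<times> {-2*R..2*R} \<times> {-2*R..2*R}"
  have cK: "compact K" unfolding K_def by (intro compact_Times compact_Icc)
  have uc2: "uniformly_continuous_on K (\<lambda>(t, u, v). P2 t u v)"
    by (rule compact_uniformly_continuous[OF continuous_on_subset[OF c2] cK]) (auto simp: K_def)
  have uc3: "uniformly_continuous_on K (\<lambda>(t, u, v). P3 t u v)"
    by (rule compact_uniformly_continuous[OF continuous_on_subset[OF c3] cK]) (auto simp: K_def)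
  show ?thesis
    unfolding has_field_derivative_iff \<Phi>_def[symmetric] lim_def[symmetric] Q_def[symmetric]
  proof (rule LIM_I)
    fix r :: real assume r: "r > 0"
    define e where "e = r / (4 * (R + 1) * (b - a + 1))"
    have e: "e > 0" using r R ab by (simp add: e_def)
    obtain d2' where d2': "d2' > 0" "\<And>x x'. x \<in> K \<Longrightarrow> x' \<in> K \<Longrightarrow> dist x' x < d2' \<Longrightarrow>
        dist ((\<lambda>(t, u, v). P2 t u v) x') ((\<lambda>(t, u, v). P2 t u v) x) < e"
      using uc2[unfolded uniformly_continuous_on_def, rule_format, OF e] by blast
    obtain d3' where d3': "d3' > 0" "\<And>x x'. x \<in> K \<Longrightarrow> x' \<in> K \<Longrightarrow> dist x' x < d3' \<Longrightarrow>
        dist ((\<lambda>(t, u, v). P3 t u v) x') ((\<lambda>(t, u, v). P3 t u v) x) < e"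
      using uc3[unfolded uniformly_continuous_on_def, rule_format, OF e] by blast
    define d where "d = min d2' d3'"
    have d: "d > 0" using d2' d3' by (simp add: d_def)
    define s where "s = min 1 (d / (2 * (R + 1)))"
    have s: "s > 0" using d R by (simp add: s_def)
    show "\<exists>s>0. \<forall>\<epsilon>. \<epsilon> \<noteq> 0 \<and> norm (\<epsilon> - 0) < s \<longrightarrow> norm ((\<Phi> \<epsilon> - \<Phi> 0) / (\<epsilon> - 0) - Q) < r"
    proof (intro exI[of _ s] conjI allI impI s)
      fix \<epsilon> :: real assume h: "\<epsilon> \<noteq> 0 \<and> norm (\<epsilon> - 0) < s"
      then have e0: "\<epsilon> \<noteq> 0" "\<bar>\<epsilon>\<bar> < s" by auto
      define qt where "qt t = (L t (u t + \<epsilon> * p t) (v t + \<epsilon> * q t) - L t (u t + 0 * p t) (v t + 0 * q t)) / \<epsilon>" for t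
      have pw: "\<bar>qt t - lim t\<bar> \<le> 2 * R * e" if t: "t \<in> {a..b}" for t
      proof -
        define U V P Qq where "U = u t" "V = v t" "P = p t" "Qq = q t"
        have bnds: "\<bar>U\<bar> \<le> R" "\<bar>V\<bar> \<le> R" "\<bar>P\<bar> \<le> R" "\<bar>Qq\<bar> \<le> R" using R(2)[OF t] by (auto simp: U_V_P_Qq_def)
        have epsR: "\<bar>\<epsilon>\<bar> * R < d / 2"
        proof -
          have "\<bar>\<epsilon>\<bar> < d / (2 * (R + 1))" using e0 by (simp add: s_def)
          then have "\<bar>\<epsilon>\<bar> * (R + 1) < d / 2" using R by (simp add: field_simps)
          moreover have "\<bar>\<epsilon>\<bar> * R \<le> \<bar>\<epsilon>\<bar> * (R + 1)" by (simp add: mult_left_mono)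
          ultimately show ?thesis by linarith
        qed
        have eps1: "\<bar>\<epsilon>\<bar> < 1" using e0 by (simp add: s_def)
        have ePb: "\<bar>\<epsilon> * P\<bar> \<le> \<bar>\<epsilon>\<bar> * R" "\<bar>\<epsilon> * Qq\<bar> \<le> \<bar>\<epsilon>\<bar> * R"
          using bnds by (auto simp: abs_mult intro: mult_left_mono)
        have eR: "\<bar>\<epsilon>\<bar> * R \<le> R" using eps1 R by (simp add: mult_left_le_one_le)
        obtain \<xi> where \<xi>: "\<bar>\<xi> - U\<bar> \<le> \<bar>(U + \<epsilon> * P) - U\<bar>"
          "L t (U + \<epsilon> * P) (V + \<epsilon> * Qq) - L t U (V + \<epsilon> * Qq) = ((U + \<epsilon> * P) - U) * P2 t \<xi> (V + \<epsilon> * Qq)"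
          using mvt_abs[of "\<lambda>w. L t w (V + \<epsilon> * Qq)" "\<lambda>w. P2 t w (V + \<epsilon> * Qq)" U "U + \<epsilon> * P"] d2[OF t] by blast
        obtain \<eta> where \<eta>: "\<bar>\<eta> - V\<bar> \<le> \<bar>(V + \<epsilon> * Qq) - V\<bar>"
          "L t U (V + \<epsilon> * Qq) - L t U V = ((V + \<epsilon> * Qq) - V) * P3 t U \<eta>"
          using mvt_abs[of "\<lambda>w. L t U w" "\<lambda>w. P3 t U w" V "V + \<epsilon> * Qq"] d3[OF t] by blast
        have qt_eq: "qt t = P * P2 t \<xi> (V + \<epsilon> * Qq) + Qq * P3 t U \<eta>"
        proof -
          have "qt t = ((L t (U + \<epsilon> * P) (V + \<epsilon> * Qq) - L t U (V + \<epsilon> * Qq)) + (L t U (V + \<epsilon> * Qq) - L t U V)) / \<epsilon>"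
            by (simp add: qt_def U_V_P_Qq_def)
          also have "\<dots> = (\<epsilon> * (P * P2 t \<xi> (V + \<epsilon> * Qq) + Qq * P3 t U \<eta>)) / \<epsilon>"
            unfolding \<xi>(2) \<eta>(2) by (simp add: algebra_simps)
          finally show ?thesis using e0 by simp
        qed
        have inK1: "(t, U, V) \<in> K" "(t, \<xi>, V + \<epsilon> * Qq) \<in> K" "(t, U, \<eta>) \<in> K"
          using t bnds \<xi>(1) \<eta>(1) ePb eR unfolding K_def by (auto simp: abs_le_iff)
        have dd1: "dist (t, \<xi>, V + \<epsilon> * Qq) (t, U, V) < d2'"
        proof -
          have "dist (t, \<xi>, V + \<epsilon> * Qq) (t, U, V) \<le> \<bar>\<xi> - U\<bar> + \<bar>V + \<epsilon> * Qq - V\<bar>" by (rule dist_triple)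
          also have "\<dots> < d" using \<xi>(1) ePb epsR by simp
          finally show ?thesis by (simp add: d_def)
        qed
        have dd2: "dist (t, U, \<eta>) (t, U, V) < d3'"
        proof -
          have "dist (t, U, \<eta>) (t, U, V) \<le> \<bar>U - U\<bar> + \<bar>\<eta> - V\<bar>" by (rule dist_triple)
          also have "\<dots> < d" using \<eta>(1) ePb epsR d by simp
          finally show ?thesis by (simp add: d_def)
        qed
        have E2: "\<bar>P2 t \<xi> (V + \<epsilon> * Qq) - P2 t U V\<bar> < e" using d2'(2)[OF inK1(1) inK1(2) dd1] by (simp add: dist_real_def)
        have E3: "\<bar>P3 t U \<eta> - P3 t U V\<bar> < e" using d3'(2)[OF inK1(1) inK1(3) dd2] by (simp add: dist_real_def)
        have "qt t - lim t = P * (P2 t \<xi> (V + \<epsilon> * Qq) - P2 t U V) + Qq * (P3 t U \<eta> - P3 t U V)"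
          unfolding qt_eq lim_def U_V_P_Qq_def by (simp add: algebra_simps)
        also have "\<bar>\<dots>\<bar> \<le> R * e + R * e"
        proof -
          have "\<bar>P * (P2 t \<xi> (V + \<epsilon> * Qq) - P2 t U V)\<bar> \<le> R * e"
            unfolding abs_mult using bnds E2 by (intro mult_mono) auto
          moreover have "\<bar>Qq * (P3 t U \<eta> - P3 t U V)\<bar> \<le> R * e"
            unfolding abs_mult using bnds E3 by (intro mult_mono) auto
          ultimately show ?thesis by (rule order_trans[OF abs_triangle_ineq add_mono])
        qed
        finally show ?thesis by simp
      qed
      have iq: "qt integrable_on {a..b}"
        unfolding qt_def using integrable_diff[OF int[of \<epsilon>] int[of 0]] by (intro integrable_on_divide) simp
      have "(\<Phi> \<epsilon> - \<Phi> 0) / (\<epsilon> - 0) - Q = integral {a..b} (\<lambda>t. qt t - lim t)"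
      proof -
        have "(\<Phi> \<epsilon> - \<Phi> 0) / \<epsilon> = integral {a..b} qt"
        proof -
          have "((\<lambda>t. L t (u t + \<epsilon> * p t) (v t + \<epsilon> * q t) - L t (u t + 0 * p t) (v t + 0 * q t)) has_integral (\<Phi> \<epsilon> - \<Phi> 0)) {a..b}"
            unfolding \<Phi>_def by (intro has_integral_diff integrable_integral int)
          from has_integral_divide[OF this, of \<epsilon>] have "(qt has_integral (\<Phi> \<epsilon> - \<Phi> 0) / \<epsilon>) {a..b}"
            unfolding qt_def .
          then show ?thesis by (rule integral_unique[symmetric])
        qed
        then show ?thesis unfolding Q_def using integral_diff[OF iq ilim] by simp
      qed
      also have "norm \<dots> \<le> integral {a..b} (\<lambda>t. 2 * R * e)"
        using pw by (intro Henstock_Kurzweil_Integration.integral_norm_bound_integral integrable_diff iq ilim) auto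
      also have "\<dots> = (b - a) * (2 * R * e)" using ab by simp
      also have "\<dots> < r"
      proof -
        have "(b - a) * (2 * R * e) \<le> (b - a + 1) * (2 * (R + 1) * e)"
          using ab R e by (intro mult_mono) auto
        also have "\<dots> = r / 2"
        proof -
          define X where "X = (R + 1) * (b - a + 1)"
          have X: "X > 0" using R ab by (simp add: X_def)
          have ee: "e = r / (4 * X)" unfolding e_def X_def by (simp add: mult.assoc)
          have "(b - a + 1) * (2 * (R + 1) * e) = 2 * X * e" unfolding X_def by (simp add: algebra_simps)
          also have "\<dots> = 2 * X * (r / (4 * X))" by (simp add: ee)
          also have "\<dots> = r / 2" using X by (simp add: field_simps)
          finally show ?thesis .
        qed
        finally show ?thesis using r by linarith
      qed
      finally show "norm ((\<Phi> \<epsilon> - \<Phi> 0) / (\<epsilon> - 0) - Q) < r" .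
    qed
  qed
qed

lemma sqmax_deriv: "((\<lambda>u::real. (max 0 u)^2) has_real_derivative 2 * max 0 u) (at u)"
proof (cases u "0::real" rule: linorder_cases)
  case less
  have ev: "\<forall>\<^sub>F w in nhds u. (\<lambda>w. 0::real) w = (\<lambda>w::real. (max 0 w)^2) w"
    using eventually_nhds_in_open[of "{..<0}" u] less by (auto elim!: eventually_mono)
  have "((\<lambda>w. 0::real) has_real_derivative 0) (at u)" by (rule DERIV_const)
  then show ?thesis using less by (subst (asm) DERIV_cong_ev[OF refl ev refl]) auto
next
  case greater
  have ev: "\<forall>\<^sub>F w in nhds u. (\<lambda>w. w^2::real) w = (\<lambda>w::real. (max 0 w)^2) w"
    using eventually_nhds_in_open[of "{0<..}" u] greater by (auto elim!: eventually_mono)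
  have "((\<lambda>w. w^2::real) has_real_derivative 2 * u) (at u)"
    by (auto intro!: derivative_eq_intros)
  then show ?thesis using greater by (subst (asm) DERIV_cong_ev[OF refl ev refl]) auto
next
  case equal
  show ?thesis unfolding equal has_field_derivative_iff
  proof (subst Lim_null, rule Lim_null_comparison[where g="\<lambda>w. \<bar>w\<bar>"])
    show "\<forall>\<^sub>F w in at 0. norm (((max 0 w)^2 - (max 0 0)^2) / (w - 0) - 2 * max 0 (0::real)) \<le> \<bar>w\<bar>"
    proof (rule always_eventually, rule allI)
      fix w :: real
      show "norm (((max 0 w)^2 - (max 0 0)^2) / (w - 0) - 2 * max 0 (0::real)) \<le> \<bar>w\<bar>"
      proof (cases "w \<le> 0")
        case True then show ?thesis by (simp add: max_def)
      next
        case False then show ?thesis by (simp add: max_def power2_eq_square)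
      qed
    qed
    show "((\<lambda>w::real. \<bar>w\<bar>) \<longlongrightarrow> 0) (at 0)" by (intro tendsto_eq_intros) auto
  qed
qed

lemma bump:
  fixes c r :: real
  defines "h \<equiv> \<lambda>t. (max 0 (r^2 - (t - c)^2))^2"
  defines "h' \<equiv> \<lambda>t. 2 * max 0 (r^2 - (t - c)^2) * (- 2 * (t - c))"
  shows "\<And>t. (h has_real_derivative h' t) (at t)" "continuous_on UNIV h'"
    "\<And>t. h t \<ge> 0" "\<And>t. r \<ge> 0 \<Longrightarrow> \<bar>t - c\<bar> \<ge> r \<Longrightarrow> h t = 0" "r > 0 \<Longrightarrow> h c > 0"
proof -
  fix t
  have d: "((\<lambda>t. r^2 - (t - c)^2) has_real_derivative (- 2 * (t - c))) (at t)"
    by (auto intro!: derivative_eq_intros)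
  show "(h has_real_derivative h' t) (at t)"
    unfolding h_def h'_def using DERIV_chain2[OF sqmax_deriv d] by simp
next
  show "continuous_on UNIV h'" unfolding h'_def by (intro continuous_intros)
next
  fix t show "h t \<ge> 0" unfolding h_def by simp
next
  fix t assume r0: "r \<ge> 0" and tr: "\<bar>t - c\<bar> \<ge> r"
  have "r^2 \<le> \<bar>t - c\<bar>^2" using r0 tr by (intro power_mono) auto
  then have "r^2 \<le> (t - c)^2" by simp
  then show "h t = 0" unfolding h_def by (simp add: max_def)
next
  assume "r > 0" then show "h c > 0" unfolding h_def by simp
qed

lemma EL_from_VI:
  fixes e :: "real \<Rightarrow> real"
  assumes ab: "a < b" and ce: "continuous_on {a..b} e"
    and VI: "\<And>h h'. (\<And>t. (h has_real_derivative h' t) (at t)) \<Longrightarrow> continuous_on UNIV h'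
              \<Longrightarrow> h a = 0 \<Longrightarrow> h b = 0 \<Longrightarrow> integral {a..b} (\<lambda>t. e t * h t) = 0"
  shows "\<forall>t\<in>{a..b}. e t = 0"
proof -
  have int0: "e t = 0" if t: "t \<in> {a<..<b}" for t
  proof (rule ccontr)
    assume ne: "e t \<noteq> 0"
    define \<sigma> where "\<sigma> = sgn (e t)"
    define e' where "e' s = \<sigma> * e s" for s
    have pos: "e' t > 0" using ne by (simp add: e'_def \<sigma>_def sgn_if)
    have ce': "continuous_on {a..b} e'" unfolding e'_def by (intro continuous_intros ce)
    have "continuous (at t within {a..b}) e'" using ce' t by (simp add: continuous_on_eq_continuous_within)
    moreover have "at t within {a..b} = at t"
      using t by (intro at_within_interior) simp
    ultimately have "continuous (at t) e'" by simp
    then obtain d where d: "d > 0" "\<And>s. dist s t < d \<Longrightarrow> dist (e' s) (e' t) < e' t"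
      using pos unfolding continuous_at_eps_delta by metis
    define r where "r = min (d/2) (min ((t - a)/2) ((b - t)/2))"
    have rr: "r \<le> d/2" "r \<le> (t-a)/2" "r \<le> (b-t)/2" unfolding r_def by (simp_all add: min_def)
    have "r > 0" using d t by (simp add: r_def)
    moreover have "a < t" "t < b" using t by auto
    moreover have "t - r > a" using rr(2) \<open>a < t\<close> by (simp add: field_simps)
    moreover have "t + r < b" using rr(3) \<open>t < b\<close> by (simp add: field_simps)
    moreover have "r < d" using rr(1) d by simp
    ultimately have r: "r > 0" "r < d" "t - r > a" "t + r < b" by auto
    define h where "h \<equiv> \<lambda>s. (max 0 (r^2 - (s - t)^2))^2"
    define h' where "h' \<equiv> \<lambda>s. 2 * max 0 (r^2 - (s - t)^2) * (- 2 * (s - t))"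
    have B1: "\<And>s. (h has_real_derivative h' s) (at s)" unfolding h_def h'_def by (rule bump(1))
    have B2: "continuous_on UNIV h'" unfolding h'_def by (rule bump(2))
    have B3: "\<And>s. h s \<ge> 0" unfolding h_def by (rule bump(3))
    have B4: "\<And>s. r \<ge> 0 \<Longrightarrow> \<bar>s - t\<bar> \<ge> r \<Longrightarrow> h s = 0" unfolding h_def by (rule bump(4))
    have B5: "h t > 0" unfolding h_def by (rule bump(5)) (use r in auto)
    have ha: "h a = 0" by (rule B4) (use r in auto)
    have hb: "h b = 0" by (rule B4) (use r in auto)
    have I0: "integral {a..b} (\<lambda>s. e s * h s) = 0" by (rule VI[OF B1 B2 ha hb])
    have "integral {a..b} (\<lambda>s. e' s * h s) = \<sigma> * integral {a..b} (\<lambda>s. e s * h s)"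
      unfolding e'_def by (simp add: mult.assoc)
    then have I1: "integral {a..b} (\<lambda>s. e' s * h s) = 0" using I0 by simp
    have ceh: "continuous_on {a..b} (\<lambda>s. e' s * h s)"
      by (intro continuous_intros ce' has_real_derivative_imp_continuous_on[OF B1]
          continuous_on_subset[of UNIV h]) auto
    have nn: "0 \<le> e' s * h s" if "s \<in> {a..b}" for s
    proof (cases "\<bar>s - t\<bar> < r")
      case True
      then have "dist s t < d" using r by (simp add: dist_real_def)
      then have "e' s > 0" using d(2)[of s] by (auto simp: dist_real_def)
      then show ?thesis using B3[of s] by simp
    next
      case False then show ?thesis using B4[of s] r by simp
    qed
    have "e' t * h t = 0"
    proof (rule has_integral_0_cbox_imp_0[of a b "\<lambda>s. e' s * h s" t])
      show "continuous_on (cbox a b) (\<lambda>s. e' s * h s)" using ceh by simp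
      show "\<And>x. x \<in> box a b \<Longrightarrow> 0 \<le> e' x * h x" using nn by auto
      show "((\<lambda>s. e' s * h s) has_integral 0) (cbox a b)"
        using I1 integrable_continuous_real[OF ceh] by (metis box_real(2) has_integral_integrable_integral)
      show "box a b \<noteq> {}" using ab by simp
      show "t \<in> cbox a b" using t by auto
    qed
    moreover have "e' t * h t > 0" using pos B5 by simp
    ultimately show False by auto
  qed
  show ?thesis
  proof
    fix t assume "t \<in> {a..b}"
    then have "t \<in> closure {a<..<b}" using ab by simp
    moreover have "continuous_on (closure {a<..<b}) e" using ab ce by simp
    ultimately show "e t = 0" using continuous_constant_on_closure[of "{a<..<b}" e 0] int0 by blast
  qed
qed

theorem mainTheorem4:
  fixes a b \<alpha> \<rho> xa xb :: real
    and L :: "real \<Rightarrow> real \<Rightarrow> real \<Rightarrow> real"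
    and x :: "real \<Rightarrow> real"
    and fixa fixb :: bool
  assumes ab: "0 < a" "a < b"
    and alpha: "0 < \<alpha>" "\<alpha> < 1"
    and rho: "0 < \<rho>"
    and L_d2: "\<And>t u v. t \<in> {a..b} \<Longrightarrow>
                 ((\<lambda>w. L t w v) has_real_derivative partial2 L t u v) (at u)"
    and L_d3: "\<And>t u v. t \<in> {a..b} \<Longrightarrow>
                 ((\<lambda>w. L t u w) has_real_derivative partial3 L t u v) (at v)"
    and L_d2_cont: "continuous_on ({a..b} \<times> UNIV \<times> UNIV) (\<lambda>(t, u, v). partial2 L t u v)"
    and L_d3_cont: "continuous_on ({a..b} \<times> UNIV \<times> UNIV) (\<lambda>(t, u, v). partial3 L t u v)"
    and J_defined: "\<And>y. C1_on a b y \<Longrightarrow>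
                 (\<lambda>t. L t (y t) (caputo_left a \<alpha> \<rho> y t)) integrable_on {a..b}"
    and D_right_cont: "\<And>y. C1_on a b y \<Longrightarrow>
          (\<exists>D. (\<forall>t\<in>{a..b}.
                  (int_right b \<alpha> \<rho> (\<lambda>s. partial3 L s (y s) (caputo_left a \<alpha> \<rho> y s))
                     has_real_derivative D t) (at t within {a..b}))
               \<and> continuous_on {a..b} D)"
    and min: "local_minimizer a b \<alpha> \<rho> L fixa xa fixb xb x"
  shows "(\<forall>t\<in>{a..b}.
            partial2 L t (x t) (caputo_left a \<alpha> \<rho> x t)
            - deriv_right a b \<alpha> \<rho> (\<lambda>s. partial3 L s (x s) (caputo_left a \<alpha> \<rho> x s)) t = 0)
         \<and> (\<not> fixa \<longrightarrow>
              int_right b \<alpha> \<rho> (\<lambda>s. partial3 L s (x s) (caputo_left a \<alpha> \<rho> x s)) a = 0)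
         \<and> (\<not> fixb \<longrightarrow>
              int_right b \<alpha> \<rho> (\<lambda>s. partial3 L s (x s) (caputo_left a \<alpha> \<rho> x s)) b = 0)"
proof -
  have a0: "0 < a" and ab': "a \<le> b" using ab by auto
  obtain \<delta> where adm: "admissible a b fixa xa fixb xb x" and \<delta>: "\<delta> > 0"
    and loc: "\<And>y. admissible a b fixa xa fixb xb y \<Longrightarrow> frac_norm a b \<alpha> \<rho> (\<lambda>t. y t - x t) < \<delta> \<Longrightarrow>
        J_fun a b \<alpha> \<rho> L x \<le> J_fun a b \<alpha> \<rho> L y"
    using min unfolding local_minimizer_def by blast
  have C1x: "C1_on a b x" and fxa: "fixa \<longrightarrow> x a = xa" and fxb: "fixb \<longrightarrow> x b = xb"
    using adm unfolding admissible_def by auto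
  obtain x' where dx: "\<forall>t\<in>{a..b}. (x has_real_derivative x' t) (at t within {a..b})"
    and cx': "continuous_on {a..b} x'"
    using C1x unfolding C1_on_def by blast
  define c where "c = \<rho> powr \<alpha> / Gamma (1 - \<alpha>)"
  define U where "U \<phi> t = integral {a..t} (\<lambda>\<tau>. kk \<alpha> \<rho> t \<tau> * \<phi> \<tau>)" for \<phi> :: "real \<Rightarrow> real" and t
  define Cx where "Cx t = caputo_left a \<alpha> \<rho> x t" for t
  have Cx_eq: "Cx t = c * U x' t" if "t \<in> {a..b}" for t
    unfolding Cx_def U_def c_def by (rule caputo_rep[OF ab(2) dx that])
  have cU: "continuous_on {a..b} (U \<phi>)" if "continuous_on {a..b} \<phi>" for \<phi>
    unfolding U_def by (rule U_cont[OF a0 ab' alpha rho that])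
  have cCx: "continuous_on {a..b} Cx"
    using continuous_on_mult_left[OF cU[OF cx'], of c] by (rule continuous_on_cong[THEN iffD1, rotated 2]) (auto simp: Cx_eq)
  have cxx: "continuous_on {a..b} x" by (rule DERIV_continuous_on) (use dx in auto)
  have comp: "continuous_on {a..b} (\<lambda>t. P t (x t) (Cx t))"
    if "continuous_on ({a..b} \<times> UNIV \<times> UNIV) (\<lambda>(t, u, v). P t u v)" for P :: "real \<Rightarrow> real \<Rightarrow> real \<Rightarrow> real"
  proof -
    have "continuous_on {a..b} ((\<lambda>(t, u, v). P t u v) \<circ> (\<lambda>t. (t, x t, Cx t)))"
      by (rule continuous_on_compose[OF _ continuous_on_subset[OF that]])
         (auto intro!: continuous_intros cxx cCx)
    then show ?thesis by (simp add: o_def)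
  qed
  define f where "f = (\<lambda>s. partial3 L s (x s) (caputo_left a \<alpha> \<rho> x s))"
  define g where "g = (\<lambda>s. partial2 L s (x s) (caputo_left a \<alpha> \<rho> x s))"
  have cf: "continuous_on {a..b} f" using comp[OF L_d3_cont] unfolding f_def Cx_def .
  have cg: "continuous_on {a..b} g" using comp[OF L_d2_cont] unfolding g_def Cx_def .
  define F where "F = int_right b \<alpha> \<rho> f"
  obtain D where dF: "\<forall>t\<in>{a..b}. (F has_real_derivative D t) (at t within {a..b})"
    and cD: "continuous_on {a..b} D"
    using D_right_cont[OF C1x] unfolding F_def f_def by blast
  have F_eq: "F \<tau> = c * integral {\<tau>..b} (\<lambda>t. kk \<alpha> \<rho> t \<tau> * f t)" for \<tau>
    unfolding F_def int_right_def kk_def c_def by simp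
  have Fb: "F b = 0" by (simp add: F_eq)
  have cF: "continuous_on {a..b} F" by (rule DERIV_continuous_on) (use dF in auto)
  have dr: "deriv_right a b \<alpha> \<rho> f t = D t" if "t \<in> {a..b}" for t
  proof -
    have "(F has_vector_derivative D t) (at t within {a..b})"
      using dF that by (simp add: has_real_derivative_iff_has_vector_derivative)
    then show ?thesis unfolding deriv_right_def F_def[symmetric]
      using vector_derivative_within_cbox[of a b t F "D t"] ab that by simp
  qed
  have VI: "integral {a..b} (\<lambda>t. (g t - D t) * h t) = h a * F a"
    if dh: "\<And>t. (h has_real_derivative h' t) (at t)" and ch': "continuous_on UNIV h'"
      and ha: "fixa \<longrightarrow> h a = 0" and hb: "fixb \<longrightarrow> h b = 0" for h h'
  proof -
    have chh: "continuous_on {a..b} h" by (rule has_real_derivative_imp_continuous_on) (use dh in auto)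
    have ch'': "continuous_on {a..b} h'" using ch' by (rule continuous_on_subset) auto
    define Ch where "Ch t = c * U h' t" for t
    have cCh: "continuous_on {a..b} Ch" unfolding Ch_def by (intro continuous_intros cU ch'')
    define y where "y \<epsilon> t = x t + \<epsilon> * h t" for \<epsilon> t
    have dy: "\<forall>t\<in>{a..b}. (y \<epsilon> has_real_derivative x' t + \<epsilon> * h' t) (at t within {a..b})" for \<epsilon>
      unfolding y_def using dx dh
      by (auto intro!: derivative_eq_intros DERIV_subset[OF dh] simp: has_field_derivative_at_within)
    have C1y: "C1_on a b (y \<epsilon>)" for \<epsilon>
      unfolding C1_on_def using dy[of \<epsilon>] by (intro exI[of _ "\<lambda>t. x' t + \<epsilon> * h' t"]) (auto intro!: continuous_intros cx' ch'')
    have ai: "(\<lambda>\<tau>. kk \<alpha> \<rho> t \<tau> * \<phi> \<tau>) integrable_on {a..t}" if "t \<in> {a..b}" "continuous_on {a..b} \<phi>" for t \<phi>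
      using lower_absint[OF a0 _ order.refl alpha rho, of t \<phi>] that continuous_on_subset[OF that(2), of "{a..t}"]
      by (intro absint_integrable) auto
    have Cy: "caputo_left a \<alpha> \<rho> (y \<epsilon>) t = Cx t + \<epsilon> * Ch t" if t: "t \<in> {a..b}" for \<epsilon> t
    proof -
      have "caputo_left a \<alpha> \<rho> (y \<epsilon>) t = c * integral {a..t} (\<lambda>\<tau>. kk \<alpha> \<rho> t \<tau> * (x' \<tau> + \<epsilon> * h' \<tau>))"
        unfolding c_def by (rule caputo_rep[OF ab(2) dy t])
      also have "integral {a..t} (\<lambda>\<tau>. kk \<alpha> \<rho> t \<tau> * (x' \<tau> + \<epsilon> * h' \<tau>))
          = integral {a..t} (\<lambda>\<tau>. kk \<alpha> \<rho> t \<tau> * x' \<tau> + \<epsilon> * (kk \<alpha> \<rho> t \<tau> * h' \<tau>))"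
        by (simp add: algebra_simps)
      also have "\<dots> = U x' t + \<epsilon> * U h' t"
        unfolding U_def using integral_add[OF ai[OF t cx'] integrable_on_mult_right[OF ai[OF t ch''], of \<epsilon>]] by simp
      finally show ?thesis using Cx_eq[OF t] by (simp add: Ch_def algebra_simps)
    qed
    define \<Phi> where "\<Phi> \<epsilon> = integral {a..b} (\<lambda>t. L t (x t + \<epsilon> * h t) (Cx t + \<epsilon> * Ch t))" for \<epsilon>
    have Jy: "J_fun a b \<alpha> \<rho> L (y \<epsilon>) = \<Phi> \<epsilon>" for \<epsilon>
      unfolding J_fun_def \<Phi>_def by (rule integral_cong) (simp add: Cy y_def)
    have Jx: "J_fun a b \<alpha> \<rho> L x = \<Phi> 0" unfolding J_fun_def \<Phi>_def Cx_def by simp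
    have intg: "(\<lambda>t. L t (x t + \<epsilon> * h t) (Cx t + \<epsilon> * Ch t)) integrable_on {a..b}" for \<epsilon>
    proof -
      have "(\<lambda>t. L t (y \<epsilon> t) (caputo_left a \<alpha> \<rho> (y \<epsilon>) t)) integrable_on {a..b}" by (rule J_defined[OF C1y])
      then show ?thesis by (rule Henstock_Kurzweil_Integration.integrable_cong[THEN iffD1, rotated]) (simp add: Cy y_def)
    qed
    have DER: "(\<Phi> has_real_derivative integral {a..b} (\<lambda>t. partial2 L t (x t) (Cx t) * h t + partial3 L t (x t) (Cx t) * Ch t)) (at 0)"
      unfolding \<Phi>_def
      by (rule first_var[OF ab' L_d2 L_d3 L_d2_cont L_d3_cont cxx cCx chh cCh intg])
    obtain Hb where Hb: "Hb \<ge> 0" "\<And>t. t \<in> {a..b} \<Longrightarrow> \<bar>h t\<bar> \<le> Hb"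
    proof -
      have "bounded (h ` {a..b})" using chh by (intro compact_imp_bounded compact_continuous_image) auto
      then obtain M where "\<forall>t\<in>{a..b}. \<bar>h t\<bar> \<le> M" by (auto simp: bounded_iff)
      then show ?thesis using that[of "\<bar>M\<bar>"] by force
    qed
    obtain Cb where Cb: "Cb \<ge> 0" "\<And>t. t \<in> {a..b} \<Longrightarrow> \<bar>Ch t\<bar> \<le> Cb"
    proof -
      have "bounded (Ch ` {a..b})" using cCh by (intro compact_imp_bounded compact_continuous_image) auto
      then obtain M where "\<forall>t\<in>{a..b}. \<bar>Ch t\<bar> \<le> M" by (auto simp: bounded_iff)
      then show ?thesis using that[of "\<bar>M\<bar>"] by force
    qed
    define s where "s = \<delta> / (Hb + Cb + 1)"
    have s: "s > 0" using \<delta> Hb Cb by (simp add: s_def)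
    have locmin: "\<Phi> 0 \<le> \<Phi> \<epsilon>" if e: "\<bar>0 - \<epsilon>\<bar> < s" for \<epsilon>
    proof -
      have admy: "admissible a b fixa xa fixb xb (y \<epsilon>)"
        unfolding admissible_def using C1y[of \<epsilon>] fxa fxb ha hb by (auto simp: y_def)
      have eqf: "(\<lambda>t. y \<epsilon> t - x t) = (\<lambda>t. \<epsilon> * h t)" by (simp add: y_def)
      have dyh: "\<forall>t\<in>{a..b}. ((\<lambda>t. \<epsilon> * h t) has_real_derivative \<epsilon> * h' t) (at t within {a..b})"
        using dh by (auto intro!: derivative_eq_intros DERIV_subset[OF dh] simp: has_field_derivative_at_within)
      have Ceh: "caputo_left a \<alpha> \<rho> (\<lambda>t. \<epsilon> * h t) t = \<epsilon> * Ch t" if t: "t \<in> {a..b}" for t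
      proof -
        have "caputo_left a \<alpha> \<rho> (\<lambda>t. \<epsilon> * h t) t = c * integral {a..t} (\<lambda>\<tau>. kk \<alpha> \<rho> t \<tau> * (\<epsilon> * h' \<tau>))"
          unfolding c_def by (rule caputo_rep[OF ab(2) dyh t])
        also have "integral {a..t} (\<lambda>\<tau>. kk \<alpha> \<rho> t \<tau> * (\<epsilon> * h' \<tau>)) = \<epsilon> * U h' t"
          unfolding U_def by (simp add: algebra_simps)
        finally show ?thesis by (simp add: Ch_def)
      qed
      have S1: "(SUP t\<in>{a..b}. \<bar>\<epsilon> * h t\<bar>) \<le> \<bar>\<epsilon>\<bar> * Hb"
      proof (rule cSUP_least)
        show "{a..b} \<noteq> {}" using ab' by simp
        fix t assume t: "t \<in> {a..b}"
        show "\<bar>\<epsilon> * h t\<bar> \<le> \<bar>\<epsilon>\<bar> * Hb" unfolding abs_mult by (rule mult_left_mono[OF Hb(2)[OF t]]) simp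
      qed
      have S2: "(SUP t\<in>{a..b}. \<bar>caputo_left a \<alpha> \<rho> (\<lambda>t. \<epsilon> * h t) t\<bar>) \<le> \<bar>\<epsilon>\<bar> * Cb"
      proof (rule cSUP_least)
        show "{a..b} \<noteq> {}" using ab' by simp
        fix t assume t: "t \<in> {a..b}"
        show "\<bar>caputo_left a \<alpha> \<rho> (\<lambda>t. \<epsilon> * h t) t\<bar> \<le> \<bar>\<epsilon>\<bar> * Cb"
          unfolding Ceh[OF t] abs_mult by (rule mult_left_mono[OF Cb(2)[OF t]]) simp
      qed
      have "frac_norm a b \<alpha> \<rho> (\<lambda>t. y \<epsilon> t - x t) \<le> \<bar>\<epsilon>\<bar> * (Hb + Cb)"
        unfolding eqf frac_norm_def using S1 S2 by (simp add: algebra_simps)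
      also have "\<dots> < \<delta>"
      proof -
        have "\<bar>\<epsilon>\<bar> < \<delta> / (Hb + Cb + 1)" using e by (simp add: s_def)
        then have "\<bar>\<epsilon>\<bar> * (Hb + Cb + 1) < \<delta>" using Hb Cb by (simp add: field_simps)
        moreover have "\<bar>\<epsilon>\<bar> * (Hb + Cb) \<le> \<bar>\<epsilon>\<bar> * (Hb + Cb + 1)" by (simp add: mult_left_mono)
        ultimately show ?thesis by linarith
      qed
      finally have "frac_norm a b \<alpha> \<rho> (\<lambda>t. y \<epsilon> t - x t) < \<delta>" .
      from loc[OF admy this] show ?thesis unfolding Jy Jx .
    qed
    have Q0: "integral {a..b} (\<lambda>t. partial2 L t (x t) (Cx t) * h t + partial3 L t (x t) (Cx t) * Ch t) = 0"
      by (rule DERIV_local_min[OF DER s]) (use locmin in auto)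
    have gf: "partial2 L t (x t) (Cx t) = g t" "partial3 L t (x t) (Cx t) = f t" for t
      by (simp_all add: f_def g_def Cx_def)
    have i_gh: "(\<lambda>t. g t * h t) integrable_on {a..b}" by (intro integrable_continuous_real continuous_intros cg chh)
    have i_fCh: "(\<lambda>t. f t * Ch t) integrable_on {a..b}" by (intro integrable_continuous_real continuous_intros cf cCh)
    have i_Dh: "(\<lambda>t. D t * h t) integrable_on {a..b}" by (intro integrable_continuous_real continuous_intros cD chh)
    have i_hF: "(\<lambda>t. h' t * F t) integrable_on {a..b}" by (intro integrable_continuous_real continuous_intros ch'' cF)
    have A: "integral {a..b} (\<lambda>t. g t * h t) + integral {a..b} (\<lambda>t. f t * Ch t) = 0"
      using Q0 unfolding gf using integral_add[OF i_gh i_fCh] by simp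
    have B: "integral {a..b} (\<lambda>t. f t * Ch t) = integral {a..b} (\<lambda>t. h' t * F t)"
    proof -
      have "integral {a..b} (\<lambda>t. f t * Ch t) = c * integral {a..b} (\<lambda>t. f t * U h' t)"
        unfolding Ch_def by (simp add: algebra_simps)
      also have "integral {a..b} (\<lambda>t. f t * U h' t) = integral {a..b} (\<lambda>\<tau>. h' \<tau> * integral {\<tau>..b} (\<lambda>t. kk \<alpha> \<rho> t \<tau> * f t))"
        unfolding U_def by (rule fubini_kk[OF a0 ab' alpha rho cf ch''])
      also have "c * \<dots> = integral {a..b} (\<lambda>t. h' t * F t)"
        unfolding F_eq by (simp add: algebra_simps)
      finally show ?thesis .
    qed
    have IBP: "((\<lambda>t. h' t * F t + h t * D t) has_integral (h b * F b - h a * F a)) {a..b}"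
    proof (rule fundamental_theorem_of_calculus[OF ab'])
      fix t assume t: "t \<in> {a..b}"
      have "((\<lambda>t. h t * F t) has_real_derivative (h' t * F t + h t * D t)) (at t within {a..b})"
        using DERIV_mult[OF DERIV_subset[OF dh[of t]] dF[rule_format, OF t]] by (simp add: algebra_simps)
      then show "((\<lambda>t. h t * F t) has_vector_derivative (h' t * F t + h t * D t)) (at t within {a..b})"
        by (simp add: has_real_derivative_iff_has_vector_derivative)
    qed
    have C: "integral {a..b} (\<lambda>t. h' t * F t) + integral {a..b} (\<lambda>t. D t * h t) = - (h a * F a)"
      using integral_unique[OF IBP] integral_add[OF i_hF i_Dh] Fb by (simp add: mult.commute)
    have "integral {a..b} (\<lambda>t. (g t - D t) * h t) = integral {a..b} (\<lambda>t. g t * h t) - integral {a..b} (\<lambda>t. D t * h t)"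
      using integral_diff[OF i_gh i_Dh] by (simp add: algebra_simps)
    then show ?thesis using A B C by linarith
  qed
  have ce: "continuous_on {a..b} (\<lambda>t. g t - D t)" by (intro continuous_intros cg cD)
  have EL: "\<forall>t\<in>{a..b}. g t - D t = 0"
  proof (rule EL_from_VI[OF ab(2) ce])
    fix h h' :: "real \<Rightarrow> real"
    assume "\<And>t. (h has_real_derivative h' t) (at t)" "continuous_on UNIV h'" "h a = 0" "h b = 0"
    then show "integral {a..b} (\<lambda>t. (g t - D t) * h t) = 0" using VI[of h h'] by simp
  qed
  have part1: "\<forall>t\<in>{a..b}. g t - deriv_right a b \<alpha> \<rho> f t = 0" using EL dr by simp
  have part2: "F a = 0" if nf: "\<not> fixa"
  proof -
    have "integral {a..b} (\<lambda>t. (g t - D t) * (b - t)) = (b - a) * F a"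
    proof (rule VI)
      show "\<And>t. ((\<lambda>t. b - t) has_real_derivative -1) (at t)" by (auto intro!: derivative_eq_intros)
    qed (use nf in auto)
    moreover have "integral {a..b} (\<lambda>t. (g t - D t) * (b - t)) = 0"
      using EL by (subst integral_cong[of _ _ "\<lambda>t. 0"]) auto
    ultimately show ?thesis using ab by simp
  qed
  show ?thesis using part1 part2 Fb unfolding f_def g_def F_def by auto
qed

end
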